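(* Let $d\ge 2$, let $H$ be a $d$-regular graph on vertex set $[h]$, and let $G$ be any $n$-lift of $H$. Then \[\lambda^*(G)\le 96\sup_{x\in Z}|\langle x,x\rangle_{N,E^*}|+480\sqrt{d}.\]
   Context: An $n$-lift $G$ of $H$ has vertex set $\{(i,j): i\in[h], j\in[n]\}$ with fibres $V_i=\{(i,j):j\in[n]\}$; for each edge $ii'$ of $H$ there is a perfect matching between $V_i$ and $V_{i'}$, and these are the only edges. $M$ is the adjacency matrix of $G$; $\overline{M}_{(i,j),(i',j')}=1/n$ if $ii'\in E(H)$ and $0$ otherwise; $N=M-\overline{M}$. The new eigenvalues of $G$ are the eigenvalues of $M$ on the subspace of vectors with $\sum_{v\in V_i}x_v=0$ for all $i$; $\lambda^*(G)$ is the largest absolute value of a new eigenvalue. For a matrix $A$, vectors $x,y$ and $E\subseteq\mathbb{R}^2$, $\langle x,y\rangle_{A,E}=\sum_{u,v:(x_u,y_v)\in E}x_uA_{uv}y_v$. Let $D^{+}=\{0\}\cup\{2^k/\sqrt{nh}:k\in\mathbb{Z},k\ge 0\}$, $E^*=\{(x_1,x_2)\in\mathbb{R}^2:x_1,x_2>0,\ x_1/x_2\in(d^{-1/2},d^{1/2})\}$, and \[Z=\Big\{x\in\mathbb{R}^{V(G)}:\|x\|_2^2\le 10,\ x_v\in D^+\ \forall v,\ \sup_v x_v\le d\cdot\inf_{v:x_v\ne0}x_v\Big\}.\] *)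

theory Defs
  imports Complex_Main
begin

definition d_regular_graph :: "nat \<Rightarrow> nat \<Rightarrow> (nat \<Rightarrow> nat \<Rightarrow> bool) \<Rightarrow> bool" where
  "d_regular_graph h d E \<longleftrightarrow>
     (\<forall>i i'. E i i' \<longrightarrow> i < h \<and> i' < h) \<and>
     (\<forall>i i'. E i i' \<longrightarrow> E i' i) \<and>
     (\<forall>i. \<not> E i i) \<and>
     (\<forall>i<h. card {i'. i' < h \<and> E i i'} = d)"

definition lift_vertices :: "nat \<Rightarrow> nat \<Rightarrow> (nat \<times> nat) set" where
  "lift_vertices h n = {0..<h} \<times> {0..<n}"

definition fibre :: "nat \<Rightarrow> nat \<Rightarrow> (nat \<times> nat) set" where
  "fibre n i = {i} \<times> {0..<n}"

text \<open>G (adjacency relation on pairs) is an n-lift of H: for each edge ii' of H the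
  edges between V_i and V_i' form a perfect matching, and there are no other edges.\<close>
definition is_lift :: "nat \<Rightarrow> nat \<Rightarrow> (nat \<Rightarrow> nat \<Rightarrow> bool)
                       \<Rightarrow> (nat \<times> nat \<Rightarrow> nat \<times> nat \<Rightarrow> bool) \<Rightarrow> bool" where
  "is_lift h n E G \<longleftrightarrow>
     (\<forall>u v. G u v \<longrightarrow> u \<in> lift_vertices h n \<and> v \<in> lift_vertices h n) \<and>
     (\<forall>u v. G u v \<longrightarrow> G v u) \<and>
     (\<forall>i j i' j'. G (i, j) (i', j') \<longrightarrow> E i i') \<and>
     (\<forall>i i'. E i i' \<longrightarrow> (\<forall>j<n. \<exists>!j'. j' < n \<and> G (i, j) (i', j')))"

definition adjM :: "(nat \<times> nat \<Rightarrow> nat \<times> nat \<Rightarrow> bool) \<Rightarrow> nat \<times> nat \<Rightarrow> nat \<times> nat \<Rightarrow> real" where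
  "adjM G u v = (if G u v then 1 else 0)"

definition Mbar :: "nat \<Rightarrow> (nat \<Rightarrow> nat \<Rightarrow> bool) \<Rightarrow> nat \<times> nat \<Rightarrow> nat \<times> nat \<Rightarrow> real" where
  "Mbar n E u v = (if E (fst u) (fst v) then 1 / real n else 0)"

definition Nmat :: "nat \<Rightarrow> (nat \<Rightarrow> nat \<Rightarrow> bool) \<Rightarrow> (nat \<times> nat \<Rightarrow> nat \<times> nat \<Rightarrow> bool)
                    \<Rightarrow> nat \<times> nat \<Rightarrow> nat \<times> nat \<Rightarrow> real" where
  "Nmat n E G u v = adjM G u v - Mbar n E u v"

definition mat_vec :: "(nat \<times> nat) set \<Rightarrow> (nat \<times> nat \<Rightarrow> nat \<times> nat \<Rightarrow> real)
                       \<Rightarrow> (nat \<times> nat \<Rightarrow> real) \<Rightarrow> nat \<times> nat \<Rightarrow> real" where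
  "mat_vec V A x u = (\<Sum>v\<in>V. A u v * x v)"

definition new_space :: "nat \<Rightarrow> nat \<Rightarrow> (nat \<times> nat \<Rightarrow> real) set" where
  "new_space h n = {x. (\<forall>v. v \<notin> lift_vertices h n \<longrightarrow> x v = 0) \<and>
                        (\<forall>i<h. (\<Sum>v\<in>fibre n i. x v) = 0)}"

definition new_eigenvalues :: "nat \<Rightarrow> nat \<Rightarrow> (nat \<times> nat \<Rightarrow> nat \<times> nat \<Rightarrow> bool) \<Rightarrow> real set" where
  "new_eigenvalues h n G = {lam. \<exists>x\<in>new_space h n. (\<exists>v. x v \<noteq> 0) \<and>
       (\<forall>u\<in>lift_vertices h n. mat_vec (lift_vertices h n) (adjM G) x u = lam * x u)}"

definition lambda_star :: "nat \<Rightarrow> nat \<Rightarrow> (nat \<times> nat \<Rightarrow> nat \<times> nat \<Rightarrow> bool) \<Rightarrow> real" where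
  "lambda_star h n G = Sup (insert 0 (abs ` new_eigenvalues h n G))"

definition restricted_form :: "(nat \<times> nat) set \<Rightarrow> (nat \<times> nat \<Rightarrow> nat \<times> nat \<Rightarrow> real)
     \<Rightarrow> (real \<times> real) set \<Rightarrow> (nat \<times> nat \<Rightarrow> real) \<Rightarrow> (nat \<times> nat \<Rightarrow> real) \<Rightarrow> real" where
  "restricted_form V A Es x y =
     (\<Sum>(u, v)\<in>{(u, v). u \<in> V \<and> v \<in> V \<and> (x u, y v) \<in> Es}. x u * A u v * y v)"

definition Dplus :: "nat \<Rightarrow> nat \<Rightarrow> real set" where
  "Dplus h n = {0} \<union> {2 ^ k / sqrt (real n * real h) | k. True}"

definition Estar :: "nat \<Rightarrow> (real \<times> real) set" where
  "Estar d = {(x1, x2). x1 > 0 \<and> x2 > 0 \<and>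
                1 / sqrt (real d) < x1 / x2 \<and> x1 / x2 < sqrt (real d)}"

text \<open>The set Z of vectors on V(G).  The condition sup_v x_v <= d * inf_{x_v <> 0} x_v is
  written pointwise (vacuous for x = 0).\<close>
definition Zset :: "nat \<Rightarrow> nat \<Rightarrow> nat \<Rightarrow> (nat \<times> nat \<Rightarrow> real) set" where
  "Zset h n d = {x. (\<forall>v. v \<notin> lift_vertices h n \<longrightarrow> x v = 0) \<and>
       (\<Sum>v\<in>lift_vertices h n. (x v)\<^sup>2) \<le> 10 \<and>
       (\<forall>v\<in>lift_vertices h n. x v \<in> Dplus h n) \<and>
       (\<forall>u\<in>lift_vertices h n. \<forall>v\<in>lift_vertices h n. x v \<noteq> 0 \<longrightarrow> x u \<le> real d * x v)}"

end

theory Submission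
  imports Defs
begin


definition bilf :: "(nat\<times>nat) set \<Rightarrow> (nat\<times>nat \<Rightarrow> nat\<times>nat \<Rightarrow> real) \<Rightarrow> (nat\<times>nat \<Rightarrow> real) \<Rightarrow> (nat\<times>nat \<Rightarrow> real) \<Rightarrow> real" where
  "bilf V A z w = (\<Sum>u\<in>V. \<Sum>v\<in>V. z u * A u v * w v)"
definition nrmf :: "(nat\<times>nat) set \<Rightarrow> (nat\<times>nat \<Rightarrow> real) \<Rightarrow> real" where
  "nrmf V z = (\<Sum>v\<in>V. (z v)^2)"
definition ipf :: "(nat\<times>nat) set \<Rightarrow> (nat\<times>nat \<Rightarrow> real) \<Rightarrow> (nat\<times>nat \<Rightarrow> real) \<Rightarrow> real" where
  "ipf V z w = (\<Sum>v\<in>V. z v * w v)"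

lemma rf_as_sum:
  assumes "finite V"
  shows "restricted_form V A Es x y =
    (\<Sum>p\<in>V\<times>V. if (x (fst p), y (snd p)) \<in> Es then x (fst p) * A (fst p) (snd p) * y (snd p) else 0)"
proof -
  have e: "{(u, v). u \<in> V \<and> v \<in> V \<and> (x u, y v) \<in> Es} = {p\<in>V\<times>V. (x (fst p), y (snd p)) \<in> Es}" by auto
  show ?thesis unfolding restricted_form_def e
    using assms by (simp add: sum.inter_filter[symmetric] case_prod_beta)
qed

lemma bil_as_sum: "bilf V A z w = (\<Sum>p\<in>V\<times>V. z (fst p) * A (fst p) (snd p) * w (snd p))"
  unfolding bilf_def by (simp add: sum.cartesian_product case_prod_beta)

lemma nrm_nonneg: "nrmf V z \<ge> 0" unfolding nrmf_def by (simp add: sum_nonneg)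

lemma bil_sym: assumes "\<And>u v. A u v = A v u" shows "bilf V A z w = bilf V A w z"
  unfolding bilf_def by (subst sum.swap) (simp add: assms mult.commute mult.left_commute)

lemma bil_add_right: "bilf V A z (\<lambda>v. w1 v + s * w2 v) = bilf V A z w1 + s * bilf V A z w2"
  unfolding bilf_def by (simp add: algebra_simps sum.distrib sum_distrib_left)
lemma bil_add_left: "bilf V A (\<lambda>v. w1 v + s * w2 v) z = bilf V A w1 z + s * bilf V A w2 z"
  unfolding bilf_def by (simp add: algebra_simps sum.distrib sum_distrib_left)

lemma quad_expand:
  assumes "\<And>u v. A u v = A v u"
  shows "bilf V A (\<lambda>v. x v + s * r v) (\<lambda>v. x v + s * r v) = bilf V A x x + 2 * s * bilf V A x r + s^2 * bilf V A r r"
  using bil_sym[OF assms, where V=V and z=r and w=x]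
  by (simp add: bil_add_left bil_add_right algebra_simps power2_eq_square)

lemma nrm_expand: "nrmf V (\<lambda>v. x v + s * r v) = nrmf V x + 2 * s * ipf V x r + s^2 * nrmf V r"
  unfolding nrmf_def ipf_def by (simp add: algebra_simps power2_eq_square sum.distrib sum_distrib_left)



lemma rowcol:
  assumes fin: "finite V" and sym: "\<And>u v. A u v = A v u"
    and row: "\<And>u. u \<in> V \<Longrightarrow> (\<Sum>v\<in>V. \<bar>A u v\<bar>) \<le> c"
  shows "(\<Sum>p\<in>V\<times>V. \<bar>A (fst p) (snd p)\<bar> * ((z (fst p))^2 + (z (snd p))^2)) \<le> 2 * c * nrmf V z"
proof -
  have e1: "(\<Sum>p\<in>V\<times>V. \<bar>A (fst p) (snd p)\<bar> * ((z (fst p))^2 + (z (snd p))^2))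
      = (\<Sum>u\<in>V. \<Sum>v\<in>V. \<bar>A u v\<bar> * ((z u)^2 + (z v)^2))"
    by (simp add: sum.cartesian_product case_prod_beta)
  have e2: "(\<Sum>u\<in>V. \<Sum>v\<in>V. \<bar>A u v\<bar> * ((z u)^2 + (z v)^2))
     = (\<Sum>u\<in>V. \<Sum>v\<in>V. \<bar>A u v\<bar> * (z u)^2) + (\<Sum>u\<in>V. \<Sum>v\<in>V. \<bar>A u v\<bar> * (z v)^2)"
    by (simp add: distrib_left sum.distrib)
  have e3: "(\<Sum>u\<in>V. \<Sum>v\<in>V. \<bar>A u v\<bar> * (z v)^2) = (\<Sum>v\<in>V. \<Sum>u\<in>V. \<bar>A v u\<bar> * (z v)^2)"
    by (subst sum.swap) (simp add: sym)
  have e4: "\<And>u. (\<Sum>v\<in>V. \<bar>A u v\<bar> * (z u)^2) = (z u)^2 * (\<Sum>v\<in>V. \<bar>A u v\<bar>)"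
    by (simp add: sum_distrib_left mult.commute)
  have e5: "\<And>v. (\<Sum>u\<in>V. \<bar>A v u\<bar> * (z v)^2) = (z v)^2 * (\<Sum>u\<in>V. \<bar>A v u\<bar>)"
    by (simp add: sum_distrib_left mult.commute)
  have b: "(\<Sum>u\<in>V. (z u)^2 * (\<Sum>v\<in>V. \<bar>A u v\<bar>)) \<le> (\<Sum>u\<in>V. (z u)^2 * c)"
    by (rule sum_mono) (simp add: mult_left_mono row)
  have "(\<Sum>u\<in>V. (z u)^2 * c) = c * nrmf V z" unfolding nrmf_def by (simp add: sum_distrib_left mult.commute)
  then show ?thesis using e1 e2 e3 e4 e5 b by simp
qed

lemma far_pointwise:
  assumes d: "real d > 0" and nc: "(\<bar>a\<bar>, \<bar>b\<bar>) \<notin> Estar d"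
  shows "\<bar>a\<bar> * \<bar>b\<bar> \<le> (a^2 + b^2) / sqrt (real d)"
proof (cases "a = 0 \<or> b = 0")
  case True then show ?thesis by (auto intro: divide_nonneg_pos simp: d)
next
  case False
  let ?s = "sqrt (real d)"
  have s: "?s > 0" using d by simp
  have pa: "\<bar>a\<bar> > 0" and pb: "\<bar>b\<bar> > 0" using False by auto
  have "\<not> (1 / ?s < \<bar>a\<bar> / \<bar>b\<bar> \<and> \<bar>a\<bar> / \<bar>b\<bar> < ?s)"
    using nc pa pb unfolding Estar_def by auto
  then consider "\<bar>a\<bar> / \<bar>b\<bar> \<le> 1 / ?s" | "?s \<le> \<bar>a\<bar> / \<bar>b\<bar>" by linarith
  then show ?thesis
  proof cases
    case 1
    then have "\<bar>a\<bar> * ?s \<le> \<bar>b\<bar>" using pb s by (simp add: field_simps)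
    then have "\<bar>a\<bar> * \<bar>b\<bar> * ?s \<le> \<bar>b\<bar> * \<bar>b\<bar>" using pb
      by (metis mult.commute mult.left_commute mult_left_mono abs_ge_zero)
    then have "\<bar>a\<bar> * \<bar>b\<bar> \<le> b^2 / ?s" using s by (simp add: field_simps power2_eq_square)
    moreover have "b^2/?s \<le> (a^2+b^2)/?s" using s by (simp add: divide_right_mono)
    ultimately show ?thesis by linarith
  next
    case 2
    then have "\<bar>b\<bar> * ?s \<le> \<bar>a\<bar>" using pb s by (simp add: field_simps)
    then have "\<bar>a\<bar> * \<bar>b\<bar> * ?s \<le> \<bar>a\<bar> * \<bar>a\<bar>" using pa
      by (metis mult.assoc mult_left_mono abs_ge_zero)
    then have "\<bar>a\<bar> * \<bar>b\<bar> \<le> a^2 / ?s" using s by (simp add: field_simps power2_eq_square)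
    moreover have "a^2/?s \<le> (a^2+b^2)/?s" using s by (simp add: divide_right_mono)
    ultimately show ?thesis by linarith
  qed
qed



lemma Estar_pos: "(p, q) \<in> Estar d \<Longrightarrow> p > 0 \<and> q > 0"
  unfolding Estar_def by auto

lemma abs_prod_le: "\<bar>a * b\<bar> \<le> (a^2 + b^2) / (2::real)"
proof -
  have "0 \<le> (\<bar>a\<bar> - \<bar>b\<bar>)^2" by simp
  then have "2 * (\<bar>a\<bar> * \<bar>b\<bar>) \<le> a^2 + b^2" by (simp add: power2_eq_square algebra_simps)
  then show ?thesis by (simp add: abs_mult)
qed

lemma sum_pairs_bound:
  assumes fin: "finite V" and sym: "\<And>u v. A u v = A v u"
    and row: "\<And>u. u \<in> V \<Longrightarrow> (\<Sum>v\<in>V. \<bar>A u v\<bar>) \<le> c"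
    and pt: "\<And>p. p \<in> V\<times>V \<Longrightarrow> \<bar>f p\<bar> \<le> \<bar>A (fst p) (snd p)\<bar> * ((z (fst p))^2 + (z (snd p))^2) * k"
    and k: "k \<ge> 0"
  shows "\<bar>\<Sum>p\<in>V\<times>V. f p\<bar> \<le> 2 * c * k * nrmf V z"
proof -
  have "\<bar>\<Sum>p\<in>V\<times>V. f p\<bar> \<le> (\<Sum>p\<in>V\<times>V. \<bar>f p\<bar>)" by (rule sum_abs)
  also have "\<dots> \<le> (\<Sum>p\<in>V\<times>V. \<bar>A (fst p) (snd p)\<bar> * ((z (fst p))^2 + (z (snd p))^2) * k)"
    by (rule sum_mono) (rule pt)
  also have "\<dots> = k * (\<Sum>p\<in>V\<times>V. \<bar>A (fst p) (snd p)\<bar> * ((z (fst p))^2 + (z (snd p))^2))"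
    by (simp add: sum_distrib_left mult.commute)
  also have "\<dots> \<le> k * (2 * c * nrmf V z)"
    by (rule mult_left_mono[OF rowcol[OF fin sym row] k])
  finally show ?thesis by (simp add: algebra_simps)
qed

lemma generic_rf_bound:
  assumes fin: "finite V" and sym: "\<And>u v. A u v = A v u"
    and row: "\<And>u. u \<in> V \<Longrightarrow> (\<Sum>v\<in>V. \<bar>A u v\<bar>) \<le> c"
  shows "\<bar>restricted_form V A Es z z\<bar> \<le> c * nrmf V z"
proof -
  have "\<bar>restricted_form V A Es z z\<bar> \<le> 2 * c * (1/2) * nrmf V z"
    unfolding rf_as_sum[OF fin]
  proof (rule sum_pairs_bound[OF fin sym row])
    fix p
    have "\<bar>z (fst p) * A (fst p) (snd p) * z (snd p)\<bar> = \<bar>A (fst p) (snd p)\<bar> * \<bar>z (fst p) * z (snd p)\<bar>"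
      by (simp add: abs_mult)
    also have "\<dots> \<le> \<bar>A (fst p) (snd p)\<bar> * (((z (fst p))^2 + (z (snd p))^2) / 2)"
      by (rule mult_left_mono[OF abs_prod_le]) simp
    finally show "\<bar>if (z (fst p), z (snd p)) \<in> Es then z (fst p) * A (fst p) (snd p) * z (snd p) else 0\<bar>
        \<le> \<bar>A (fst p) (snd p)\<bar> * ((z (fst p))^2 + (z (snd p))^2) * (1/2)" by auto
  qed (simp_all add: divide_nonneg_nonneg)
  then show ?thesis by simp
qed

lemma generic_bil_bound:
  assumes fin: "finite V" and sym: "\<And>u v. A u v = A v u"
    and row: "\<And>u. u \<in> V \<Longrightarrow> (\<Sum>v\<in>V. \<bar>A u v\<bar>) \<le> c"
  shows "\<bar>bilf V A z z\<bar> \<le> c * nrmf V z"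
proof -
  have "\<bar>bilf V A z z\<bar> \<le> 2 * c * (1/2) * nrmf V z"
    unfolding bil_as_sum
  proof (rule sum_pairs_bound[OF fin sym row])
    fix p
    have "\<bar>z (fst p) * A (fst p) (snd p) * z (snd p)\<bar> = \<bar>A (fst p) (snd p)\<bar> * \<bar>z (fst p) * z (snd p)\<bar>"
      by (simp add: abs_mult)
    also have "\<dots> \<le> \<bar>A (fst p) (snd p)\<bar> * (((z (fst p))^2 + (z (snd p))^2) / 2)"
      by (rule mult_left_mono[OF abs_prod_le]) simp
    finally show "\<bar>z (fst p) * A (fst p) (snd p) * z (snd p)\<bar>
        \<le> \<bar>A (fst p) (snd p)\<bar> * ((z (fst p))^2 + (z (snd p))^2) * (1/2)" by auto
  qed (simp_all add: divide_nonneg_nonneg)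
  then show ?thesis by simp
qed

definition farsum :: "(nat\<times>nat) set \<Rightarrow> (nat\<times>nat \<Rightarrow> nat\<times>nat \<Rightarrow> real) \<Rightarrow> nat \<Rightarrow> (nat\<times>nat \<Rightarrow> real) \<Rightarrow> real" where
  "farsum V A d y = (\<Sum>p\<in>V\<times>V. if (\<bar>y (fst p)\<bar>, \<bar>y (snd p)\<bar>) \<in> Estar d then 0
        else y (fst p) * A (fst p) (snd p) * y (snd p))"

lemma far_bound:
  assumes fin: "finite V" and sym: "\<And>u v. A u v = A v u"
    and row: "\<And>u. u \<in> V \<Longrightarrow> (\<Sum>v\<in>V. \<bar>A u v\<bar>) \<le> 2 * real d" and d: "d \<ge> 1"
  shows "\<bar>farsum V A d y\<bar> \<le> 4 * sqrt (real d) * nrmf V y"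
proof -
  have dp: "real d > 0" using d by simp
  have "\<bar>farsum V A d y\<bar> \<le> 2 * (2 * real d) * (1 / sqrt (real d)) * nrmf V y"
    unfolding farsum_def
  proof (rule sum_pairs_bound[OF fin sym row])
    fix p
    show "\<bar>if (\<bar>y (fst p)\<bar>, \<bar>y (snd p)\<bar>) \<in> Estar d then 0
        else y (fst p) * A (fst p) (snd p) * y (snd p)\<bar>
        \<le> \<bar>A (fst p) (snd p)\<bar> * ((y (fst p))^2 + (y (snd p))^2) * (1 / sqrt (real d))"
    proof (cases "(\<bar>y (fst p)\<bar>, \<bar>y (snd p)\<bar>) \<in> Estar d")
      case True then show ?thesis by (simp add: dp)
    next
      case False
      have "\<bar>y (fst p) * A (fst p) (snd p) * y (snd p)\<bar> = \<bar>A (fst p) (snd p)\<bar> * (\<bar>y (fst p)\<bar> * \<bar>y (snd p)\<bar>)"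
        by (simp add: abs_mult)
      also have "\<dots> \<le> \<bar>A (fst p) (snd p)\<bar> * (((y (fst p))^2 + (y (snd p))^2) / sqrt (real d))"
        by (rule mult_left_mono[OF far_pointwise[OF dp False]]) simp
      finally show ?thesis using False by simp
    qed
  qed (simp_all add: divide_nonneg_nonneg)
  also have "2 * (2 * real d) * (1 / sqrt (real d)) = 4 * sqrt (real d)"
    using dp by (simp add: field_simps real_sqrt_mult[symmetric] flip: real_sqrt_mult)
  finally show ?thesis .
qed

lemma decomp_pointwise:
  fixes a b g :: real
  shows "a * g * b = (if (\<bar>a\<bar>, \<bar>b\<bar>) \<in> Estar d then 0 else a * g * b)
     + 2 * (if (max a 0, max b 0) \<in> Estar d then max a 0 * g * max b 0 else 0)
     + 2 * (if (max (-a) 0, max (-b) 0) \<in> Estar d then max (-a) 0 * g * max (-b) 0 else 0)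
     - (if (\<bar>a\<bar>, \<bar>b\<bar>) \<in> Estar d then \<bar>a\<bar> * g * \<bar>b\<bar> else 0)"
proof (cases "(\<bar>a\<bar>, \<bar>b\<bar>) \<in> Estar d")
  case False
  have "(max a 0, max b 0) \<notin> Estar d"
  proof
    assume "(max a 0, max b 0) \<in> Estar d"
    then have "a > 0" "b > 0" using Estar_pos by (auto simp: max_def split: if_splits)
    with False \<open>(max a 0, max b 0) \<in> Estar d\<close> show False by simp
  qed
  moreover have "(max (-a) 0, max (-b) 0) \<notin> Estar d"
  proof
    assume "(max (-a) 0, max (-b) 0) \<in> Estar d"
    then have "a < 0" "b < 0" using Estar_pos by (auto simp: max_def split: if_splits)
    with False \<open>(max (-a) 0, max (-b) 0) \<in> Estar d\<close> show False by simp
  qed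
  ultimately show ?thesis using False by simp
next
  case True
  then have "\<bar>a\<bar> > 0" "\<bar>b\<bar> > 0" using Estar_pos[OF True] by auto
  then consider "a > 0" "b > 0" | "a < 0" "b < 0" | "a > 0" "b < 0" | "a < 0" "b > 0" by linarith
  then show ?thesis
  proof cases
    case 1 then show ?thesis using True Estar_pos[of 0 "\<bar>b\<bar>" d] Estar_pos[of "\<bar>a\<bar>" 0 d] by (simp add: max_def)
  next
    case 2 then show ?thesis using True Estar_pos[of 0 "\<bar>b\<bar>" d] Estar_pos[of "\<bar>a\<bar>" 0 d] by (simp add: max_def)
  next
    case 3
    have "(max a 0, max b 0) \<notin> Estar d" "(max (-a) 0, max (-b) 0) \<notin> Estar d"
      using 3 Estar_pos by (force simp: max_def)+
    then show ?thesis using 3 True by simp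
  next
    case 4
    have "(max a 0, max b 0) \<notin> Estar d" "(max (-a) 0, max (-b) 0) \<notin> Estar d"
      using 4 Estar_pos by (force simp: max_def)+
    then show ?thesis using 4 True by simp
  qed
qed

lemma decomp:
  assumes fin: "finite V"
  shows "bilf V A y y = farsum V A d y + 2 * restricted_form V A (Estar d) (\<lambda>v. max (y v) 0) (\<lambda>v. max (y v) 0)
     + 2 * restricted_form V A (Estar d) (\<lambda>v. max (- y v) 0) (\<lambda>v. max (- y v) 0)
     - restricted_form V A (Estar d) (\<lambda>v. \<bar>y v\<bar>) (\<lambda>v. \<bar>y v\<bar>)"
  unfolding bil_as_sum farsum_def rf_as_sum[OF fin]
  by (subst decomp_pointwise[where d=d]) (simp add: sum.distrib sum_subtractf sum_distrib_left)



lemma sum_if_eq1: "a \<le> K \<Longrightarrow> (\<Sum>t\<in>{..K::nat}. if t = a then (1::real) else 0) = 1"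
  by (simp add: sum.delta)

lemma count_lemma:
  fixes bu bv K :: nat
  assumes "bu \<le> Suc bv" "bv \<le> Suc bu" "bu < K" "bv < K"
  shows "(\<Sum>t\<in>{..K}. if (bu = t \<or> Suc bu = t) \<and> (bv = t \<or> Suc bv = t) then 1 else 0::real)
       - (\<Sum>t\<in>{..K}. if bu = t \<and> bv = t then 1 else 0) = 1"
proof -
  consider "bu = bv" | "bu = Suc bv" | "bv = Suc bu" using assms(1,2) by linarith
  then show ?thesis
  proof cases
    case 1
    have "(\<Sum>t\<in>{..K}. if (bu = t \<or> Suc bu = t) \<and> (bv = t \<or> Suc bv = t) then 1 else 0::real)
        = (\<Sum>t\<in>{..K}. (if t = bu then 1 else 0) + (if t = Suc bu then 1 else 0))"
      using 1 by (intro sum.cong) auto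
    also have "\<dots> = 2" using assms 1 by (simp add: sum.distrib sum.delta)
    finally show ?thesis using 1 assms by (simp add: sum.delta eq_commute[of bv])
  next
    case 2
    have "(\<Sum>t\<in>{..K}. if (bu = t \<or> Suc bu = t) \<and> (bv = t \<or> Suc bv = t) then 1 else 0::real)
        = (\<Sum>t\<in>{..K}. (if t = bu then 1 else 0))"
      using 2 by (intro sum.cong) auto
    moreover have "(\<Sum>t\<in>{..K}. if bu = t \<and> bv = t then 1 else 0::real) = 0"
      using 2 by (intro sum.neutral) auto
    ultimately show ?thesis using 2 assms by (simp add: sum.delta)
  next
    case 3
    have "(\<Sum>t\<in>{..K}. if (bu = t \<or> Suc bu = t) \<and> (bv = t \<or> Suc bv = t) then 1 else 0::real)
        = (\<Sum>t\<in>{..K}. (if t = bv then 1 else 0))"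
      using 3 by (intro sum.cong) auto
    moreover have "(\<Sum>t\<in>{..K}. if bu = t \<and> bv = t then 1 else 0::real) = 0"
      using 3 by (intro sum.neutral) auto
    ultimately show ?thesis using 3 assms by (simp add: sum.delta)
  qed
qed

lemma count_le2:
  fixes b K :: nat
  shows "(\<Sum>t\<in>{..K}. if b = t \<or> Suc b = t then 1 else 0::real) \<le> 2"
proof -
  have "(\<Sum>t\<in>{..K}. if b = t \<or> Suc b = t then 1 else 0::real)
      \<le> (\<Sum>t\<in>{..K}. (if t = b then 1 else 0) + (if t = Suc b then 1 else 0))"
    by (intro sum_mono) auto
  also have "\<dots> \<le> 2" by (simp add: sum.distrib sum.delta)
  finally show ?thesis .
qed

lemma count_le1:
  fixes b K :: nat
  shows "(\<Sum>t\<in>{..K}. if b = t then 1 else 0::real) \<le> 1"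
  by (simp add: sum.delta)



definition lv :: "(nat\<times>nat) set \<Rightarrow> (nat\<times>nat \<Rightarrow> nat) \<Rightarrow> real \<Rightarrow> nat\<times>nat \<Rightarrow> real" where
  "lv Q k \<tau> v = (if v \<in> Q then 2^(k v) * \<tau> else 0)"

lemma Estar_scale:
  assumes "\<alpha> > (0::real)"
  shows "((\<alpha> * a, \<alpha> * b) \<in> Estar d) = ((a, b) \<in> Estar d)"
proof -
  have "(\<alpha> * a) / (\<alpha> * b) = a / b" using assms by simp
  moreover have "(\<alpha> * a > 0) = (a > 0)" "(\<alpha> * b > 0) = (b > 0)"
    using assms by (simp_all add: zero_less_mult_iff)
  ultimately show ?thesis unfolding Estar_def by simp
qed

lemma Estar_sym: "(a, b) \<in> Estar d \<Longrightarrow> (b, a) \<in> Estar d"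
proof -
  assume h: "(a, b) \<in> Estar d"
  then have a: "a > 0" and b: "b > 0" and l: "1 / sqrt (real d) < a / b" and u: "a / b < sqrt (real d)"
    unfolding Estar_def by auto
  have "a / b > 0" using a b by simp
  then have s: "sqrt (real d) > 0" using u by linarith
  have "b / a = 1 / (a / b)" by simp
  moreover have "1 / (a / b) < sqrt (real d)" using l s a b
    by (simp add: field_simps)
  moreover have "1 / sqrt (real d) < 1 / (a / b)" using u s a b
    by (simp add: field_simps)
  ultimately show ?thesis using a b unfolding Estar_def by auto
qed

lemma rf_scale:
  assumes fin: "finite V" and "\<alpha> > 0"
  shows "restricted_form V A (Estar d) (\<lambda>v. \<alpha> * z v) (\<lambda>v. \<alpha> * z v) = \<alpha>^2 * restricted_form V A (Estar d) z z"
proof -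
  have "\<And>p. (if (\<alpha> * z (fst p), \<alpha> * z (snd p)) \<in> Estar d then \<alpha> * z (fst p) * A (fst p) (snd p) * (\<alpha> * z (snd p)) else 0)
     = \<alpha>^2 * (if (z (fst p), z (snd p)) \<in> Estar d then z (fst p) * A (fst p) (snd p) * z (snd p) else 0)"
    using Estar_scale[OF assms(2)] by (simp add: power2_eq_square)
  then show ?thesis unfolding rf_as_sum[OF fin] by (simp add: sum_distrib_left)
qed

lemma lift_fin: "finite (lift_vertices h n)" unfolding lift_vertices_def by simp

lemma lv_nonneg: "\<tau> > 0 \<Longrightarrow> lv Q k \<tau> v \<ge> 0" unfolding lv_def by simp

lemma Z_member:
  assumes hp: "h > 0" and np: "n > 0" and QV: "Q \<subseteq> lift_vertices h n"
    and ratio: "\<And>u v. u \<in> Q \<Longrightarrow> v \<in> Q \<Longrightarrow> (2::real)^(k u) \<le> real d * 2^(k v)"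
    and nb: "((2::real)^j)^2 * nrmf (lift_vertices h n) (lv Q k (1 / sqrt (real n * real h))) \<le> 10"
  shows "(\<lambda>v. (2::real)^j * lv Q k (1 / sqrt (real n * real h)) v) \<in> Zset h n d"
proof -
  let ?\<tau> = "1 / sqrt (real n * real h)"
  have tp: "?\<tau> > 0" using hp np by simp
  let ?z = "\<lambda>v. (2::real)^j * lv Q k ?\<tau> v"
  have c1: "\<forall>v. v \<notin> lift_vertices h n \<longrightarrow> ?z v = 0" using QV unfolding lv_def by auto
  have c2: "(\<Sum>v\<in>lift_vertices h n. (?z v)\<^sup>2) \<le> 10"
    using nb unfolding nrmf_def by (simp add: power_mult_distrib sum_distrib_left)
  have c3: "\<forall>v\<in>lift_vertices h n. ?z v \<in> Dplus h n"
  proof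
    fix v assume "v \<in> lift_vertices h n"
    show "?z v \<in> Dplus h n"
    proof (cases "v \<in> Q")
      case True
      have "?z v = 2^(j + k v) / sqrt (real n * real h)" using True unfolding lv_def
        by (simp add: power_add)
      then show ?thesis unfolding Dplus_def by blast
    next
      case False then show ?thesis unfolding lv_def Dplus_def by simp
    qed
  qed
  have c4: "\<forall>u\<in>lift_vertices h n. \<forall>v\<in>lift_vertices h n. ?z v \<noteq> 0 \<longrightarrow> ?z u \<le> real d * ?z v"
  proof (intro ballI impI)
    fix u v assume "u \<in> lift_vertices h n" "v \<in> lift_vertices h n" "?z v \<noteq> 0"
    then have vQ: "v \<in> Q" unfolding lv_def by (auto split: if_splits)
    show "?z u \<le> real d * ?z v"
    proof (cases "u \<in> Q")
      case True
      have "(2::real)^(k u) * (2^j * ?\<tau>) \<le> real d * 2^(k v) * (2^j * ?\<tau>)"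
        by (rule mult_right_mono[OF ratio[OF True vQ]]) (use tp in simp)
      then show ?thesis using True vQ unfolding lv_def by (simp add: algebra_simps)
    next
      case False
      then show ?thesis using vQ tp unfolding lv_def by simp
    qed
  qed
  show ?thesis unfolding Zset_def using c1 c2 c3 c4 by blast
qed

lemma exists_scale:
  fixes N :: real
  assumes "0 < N" "N \<le> 10"
  shows "\<exists>j::nat. 4^j * N \<le> 10 \<and> 10 < 4^(Suc j) * N"
proof -
  obtain m :: nat where m: "10 / N < 4^m" using real_arch_pow[of 4 "10/N"] by auto
  then have "10 < 4^m * N" using assms by (simp add: field_simps)
  define m0 where "m0 = (LEAST m::nat. 10 < 4^m * N)"
  have m0: "10 < 4^m0 * N" unfolding m0_def by (rule LeastI[of _ m]) fact
  have "m0 \<noteq> 0" using m0 assms by (intro notI) simp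
  then obtain j where j: "m0 = Suc j" by (cases m0) auto
  have "\<not> 10 < 4^j * N" using j unfolding m0_def
    by (metis lessI not_less_Least)
  then show ?thesis using m0 j by (intro exI[of _ j]) simp
qed

lemma rf_zero_if_nrm0:
  assumes fin: "finite V" and "nrmf V z = 0"
  shows "restricted_form V A (Estar d) z z = 0"
proof -
  have "\<forall>v\<in>V. (z v)^2 = 0" using assms unfolding nrmf_def
    by (subst sum_nonneg_eq_0_iff[symmetric]) (auto simp: fin)
  then have z0: "\<forall>v\<in>V. z v = 0" by simp
  show ?thesis unfolding rf_as_sum[OF fin]
    by (rule sum.neutral) (use z0 Estar_pos in \<open>fastforce\<close>)
qed

lemma scale_bound:
  assumes hp: "h > 0" and np: "n > 0" and QV: "Q \<subseteq> lift_vertices h n"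
    and ratio: "\<And>u v. u \<in> Q \<Longrightarrow> v \<in> Q \<Longrightarrow> (2::real)^(k u) \<le> real d * 2^(k v)"
    and nb: "nrmf (lift_vertices h n) (lv Q k (1 / sqrt (real n * real h))) \<le> 10"
    and SZ: "\<And>z. z \<in> Zset h n d \<Longrightarrow> \<bar>restricted_form (lift_vertices h n) A (Estar d) z z\<bar> \<le> S"
  shows "\<bar>restricted_form (lift_vertices h n) A (Estar d) (lv Q k (1 / sqrt (real n * real h))) (lv Q k (1 / sqrt (real n * real h)))\<bar>
     \<le> 2/5 * S * nrmf (lift_vertices h n) (lv Q k (1 / sqrt (real n * real h)))"
proof -
  let ?V = "lift_vertices h n"
  let ?c = "lv Q k (1 / sqrt (real n * real h))"
  let ?N = "nrmf ?V ?c"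
  let ?r = "restricted_form ?V A (Estar d) ?c ?c"
  have S0: "S \<ge> 0"
  proof -
    have "(\<lambda>v. (2::real)^0 * lv {} k (1 / sqrt (real n * real h)) v) \<in> Zset h n d"
      by (rule Z_member[OF hp np]) (auto simp: nrmf_def lv_def)
    from SZ[OF this] show ?thesis using abs_ge_zero order_trans by blast
  qed
  show ?thesis
  proof (cases "?N = 0")
    case True
    then show ?thesis using rf_zero_if_nrm0[OF lift_fin True] by simp
  next
    case False
    then have Np: "?N > 0" using nrm_nonneg[of ?V ?c] by linarith
    obtain j where j1: "4^j * ?N \<le> 10" and j2: "10 < 4^(Suc j) * ?N"
      using exists_scale[OF Np nb] by blast
    have pw: "((2::real)^j)^2 = 4^j" by (metis power_mult power_mult_distrib mult.commute power2_eq_square num_double numeral_times_numeral)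
    have "(\<lambda>v. (2::real)^j * ?c v) \<in> Zset h n d"
      by (rule Z_member[OF hp np QV ratio]) (use j1 pw in simp_all)
    from SZ[OF this] have "\<bar>((2::real)^j)^2 * ?r\<bar> \<le> S"
      by (simp add: rf_scale[OF lift_fin])
    then have a: "4^j * \<bar>?r\<bar> \<le> S" using pw by (simp add: abs_mult)
    have fp: "(4::real)^j > 0" by simp
    have "\<bar>?r\<bar> \<le> S / 4^j" using a fp by (simp add: field_simps)
    also have "S / 4^j \<le> S * (4 * ?N / 10)"
    proof -
      have "1 / (4::real)^j \<le> 4 * ?N / 10" using j2 fp by (simp add: field_simps)
      from mult_left_mono[OF this S0] show ?thesis by simp
    qed
    finally show ?thesis by simp
  qed
qed



lemma div_close:
  fixes a b w :: nat
  assumes "a \<le> b + w" "w > 0"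
  shows "a div w \<le> Suc (b div w)"
proof -
  have "a div w \<le> (b + w) div w" by (rule div_le_mono[OF assms(1)])
  also have "\<dots> = Suc (b div w)" using assms(2) by simp
  finally show ?thesis .
qed

lemma block_span:
  fixes a b w :: nat
  assumes "a div w \<le> Suc (b div w)" "w > 0"
  shows "a \<le> b + (2 * w - 1)"
proof -
  have a: "a = w * (a div w) + a mod w" by simp
  have am: "a mod w < w" using assms(2) by simp
  have b: "w * (b div w) \<le> b" by (simp add: times_div_less_eq_dividend)
  have m: "w * (a div w) \<le> w * Suc (b div w)" by (rule mult_le_mono2[OF assms(1)])
  have "w * Suc (b div w) = w * (b div w) + w" by simp
  then show ?thesis using a am b m by linarith
qed

lemma pow_ratio:
  fixes a b w d :: nat
  assumes "a \<le> b + (2 * w - 1)" "(2::real)^(2*w-1) \<le> real d"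
  shows "(2::real)^a \<le> real d * 2^b"
proof -
  have "(2::real)^a \<le> 2^(b + (2*w-1))" by (rule power_increasing[OF assms(1)]) simp
  also have "\<dots> = 2^(2*w-1) * 2^b" by (simp add: power_add)
  also have "\<dots> \<le> real d * 2^b" by (rule mult_right_mono[OF assms(2)]) simp
  finally show ?thesis .
qed

lemma close_levels:
  fixes ku kv w d :: nat and \<tau> :: real
  assumes tp: "\<tau> > 0" and E: "(2^ku * \<tau>, 2^kv * \<tau>) \<in> Estar d"
    and wd: "real d < 2^(2*w+1)"
  shows "ku \<le> kv + w"
proof (rule ccontr)
  assume "\<not> ku \<le> kv + w"
  then have le: "w + 1 \<le> ku - kv" and kk: "ku = (ku - kv) + kv" by auto
  have "(2::real)^(w+1) \<le> 2^(ku - kv)" by (rule power_increasing[OF le]) simp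
  also have "\<dots> = (2^ku * \<tau>) / (2^kv * \<tau>)" using tp by (subst kk) (simp add: power_add)
  also have "\<dots> < sqrt (real d)" using E unfolding Estar_def by simp
  finally have lt: "(2::real)^(w+1) < sqrt (real d)" .
  have "((2::real)^(w+1))^2 < (sqrt (real d))^2"
    by (rule power_strict_mono[OF lt]) simp_all
  then have "(2::real)^(2*w+2) < real d" by (simp add: power_mult[symmetric] mult.commute)
  moreover have "(2::real)^(2*w+1) \<le> 2^(2*w+2)" by (rule power_increasing) simp_all
  ultimately show False using wd by linarith
qed

lemma lv_pos_in: "\<tau> > 0 \<Longrightarrow> (lv Q k \<tau> u, lv Q k \<tau> v) \<in> Estar d \<Longrightarrow> u \<in> Q \<and> v \<in> Q"
  using Estar_pos unfolding lv_def by (fastforce split: if_splits)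

lemma rf_sub:
  assumes fin: "finite V" and sub: "Q' \<subseteq> Q"
  shows "restricted_form V A (Estar d) (lv Q' k \<tau>) (lv Q' k \<tau>) =
    (\<Sum>p\<in>V\<times>V. if fst p \<in> Q' \<and> snd p \<in> Q' then
        (if (lv Q k \<tau> (fst p), lv Q k \<tau> (snd p)) \<in> Estar d then lv Q k \<tau> (fst p) * A (fst p) (snd p) * lv Q k \<tau> (snd p) else 0)
      else 0)"
  unfolding rf_as_sum[OF fin]
proof (rule sum.cong[OF refl])
  fix p :: "(nat\<times>nat)\<times>(nat\<times>nat)"
  show "(if (lv Q' k \<tau> (fst p), lv Q' k \<tau> (snd p)) \<in> Estar d then lv Q' k \<tau> (fst p) * A (fst p) (snd p) * lv Q' k \<tau> (snd p) else 0) =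
    (if fst p \<in> Q' \<and> snd p \<in> Q' then
        (if (lv Q k \<tau> (fst p), lv Q k \<tau> (snd p)) \<in> Estar d then lv Q k \<tau> (fst p) * A (fst p) (snd p) * lv Q k \<tau> (snd p) else 0)
      else 0)"
  proof (cases "fst p \<in> Q' \<and> snd p \<in> Q'")
    case True
    then have "lv Q' k \<tau> (fst p) = lv Q k \<tau> (fst p)" "lv Q' k \<tau> (snd p) = lv Q k \<tau> (snd p)"
      using sub unfolding lv_def by auto
    then show ?thesis using True by simp
  next
    case False
    then have "lv Q' k \<tau> (fst p) = 0 \<or> lv Q' k \<tau> (snd p) = 0" unfolding lv_def by auto
    then have nE: "(lv Q' k \<tau> (fst p), lv Q' k \<tau> (snd p)) \<notin> Estar d" using Estar_pos by fastforce
    show ?thesis by (simp only: if_not_P[OF False] if_not_P[OF nE])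
  qed
qed

lemma nrm_sub:
  assumes sub: "Q' \<subseteq> Q"
  shows "nrmf V (lv Q' k \<tau>) = (\<Sum>v\<in>V. (lv Q k \<tau> v)^2 * (if v \<in> Q' then 1 else 0))"
  unfolding nrmf_def by (rule sum.cong) (use sub in \<open>auto simp: lv_def\<close>)



lemma S_nonneg:
  assumes hp: "h > 0" and np: "n > 0"
    and SZ: "\<And>z. z \<in> Zset h n d \<Longrightarrow> \<bar>restricted_form (lift_vertices h n) A (Estar d) z z\<bar> \<le> S"
  shows "S \<ge> 0"
proof -
  have "(\<lambda>v. (2::real)^0 * lv {} k (1 / sqrt (real n * real h)) v) \<in> Zset h n d"
    by (rule Z_member[OF hp np]) (auto simp: nrmf_def lv_def)
  from SZ[OF this] show ?thesis using abs_ge_zero order_trans by blast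
qed

lemma window_bound:
  fixes h n d w :: nat and A S and k :: "nat\<times>nat \<Rightarrow> nat" and Q
  assumes hp: "h > 0" and np: "n > 0" and QV: "Q \<subseteq> lift_vertices h n"
    and w0: "w > 0" and wd1: "(2::real)^(2*w-1) \<le> real d" and wd2: "real d < 2^(2*w+1)"
    and nb: "nrmf (lift_vertices h n) (lv Q k (1 / sqrt (real n * real h))) \<le> 10"
    and SZ: "\<And>z. z \<in> Zset h n d \<Longrightarrow> \<bar>restricted_form (lift_vertices h n) A (Estar d) z z\<bar> \<le> S"
  shows "\<bar>restricted_form (lift_vertices h n) A (Estar d) (lv Q k (1 / sqrt (real n * real h))) (lv Q k (1 / sqrt (real n * real h)))\<bar>
     \<le> 6/5 * S * nrmf (lift_vertices h n) (lv Q k (1 / sqrt (real n * real h)))"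
proof -
  define V where "V = lift_vertices h n"
  define \<tau> where "\<tau> = 1 / sqrt (real n * real h)"
  define c where "c = lv Q k \<tau>"
  have fin: "finite V" unfolding V_def by (rule lift_fin)
  have tp: "\<tau> > 0" unfolding \<tau>_def using hp np by simp
  have S0: "S \<ge> 0" by (rule S_nonneg[OF hp np SZ])
  define bl where "bl v = k v div w" for v
  define K where "K = Suc (Max (bl ` V))"
  have blK: "bl v < K" if "v \<in> V" for v
    unfolding K_def using fin that by (simp add: le_imp_less_Suc)
  define T where "T t = Q \<inter> {v. bl v = t \<or> Suc (bl v) = t}" for t
  define C where "C t = Q \<inter> {v. bl v = t}" for t
  define F where "F p = (if (c (fst p), c (snd p)) \<in> Estar d then c (fst p) * A (fst p) (snd p) * c (snd p) else 0)" for p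
  define cT where "cT p = (\<Sum>t\<in>{..K}. if fst p \<in> T t \<and> snd p \<in> T t then 1 else 0::real)" for p
  define cC where "cC p = (\<Sum>t\<in>{..K}. if fst p \<in> C t \<and> snd p \<in> C t then 1 else 0::real)" for p
  have TQ: "T t \<subseteq> Q" for t unfolding T_def by auto
  have CQ: "C t \<subseteq> Q" for t unfolding C_def by auto
  have rfQ: "restricted_form V A (Estar d) c c = (\<Sum>p\<in>V\<times>V. F p)"
    unfolding rf_as_sum[OF fin] F_def by simp
  have sum_swap_lemma: "(\<Sum>t\<in>{..K}. \<Sum>p\<in>V\<times>V. if fst p \<in> X t \<and> snd p \<in> X t then F p else 0)
      = (\<Sum>p\<in>V\<times>V. F p * (\<Sum>t\<in>{..K}. if fst p \<in> X t \<and> snd p \<in> X t then 1 else 0))" for X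
    by (subst sum.swap) (simp add: sum_distrib_left if_distrib cong: if_cong)
  have sT: "(\<Sum>t\<in>{..K}. restricted_form V A (Estar d) (lv (T t) k \<tau>) (lv (T t) k \<tau>)) = (\<Sum>p\<in>V\<times>V. F p * cT p)"
  proof -
    have "restricted_form V A (Estar d) (lv (T t) k \<tau>) (lv (T t) k \<tau>) =
        (\<Sum>p\<in>V\<times>V. if fst p \<in> T t \<and> snd p \<in> T t then F p else 0)" for t
      unfolding rf_sub[OF fin TQ] F_def c_def ..
    then show ?thesis by (simp only: sum_swap_lemma cT_def)
  qed
  have sC: "(\<Sum>t\<in>{..K}. restricted_form V A (Estar d) (lv (C t) k \<tau>) (lv (C t) k \<tau>)) = (\<Sum>p\<in>V\<times>V. F p * cC p)"
  proof -
    have "restricted_form V A (Estar d) (lv (C t) k \<tau>) (lv (C t) k \<tau>) =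
        (\<Sum>p\<in>V\<times>V. if fst p \<in> C t \<and> snd p \<in> C t then F p else 0)" for t
      unfolding rf_sub[OF fin CQ] F_def c_def ..
    then show ?thesis by (simp only: sum_swap_lemma cC_def)
  qed
  have pt: "F p * cT p - F p * cC p = F p" if pV: "p \<in> V\<times>V" for p
  proof (cases "(c (fst p), c (snd p)) \<in> Estar d")
    case False then show ?thesis unfolding F_def by simp
  next
    case True
    have uv: "fst p \<in> Q \<and> snd p \<in> Q" using lv_pos_in[OF tp] True unfolding c_def by blast
    have c1: "k (fst p) \<le> k (snd p) + w"
      by (rule close_levels[OF tp _ wd2]) (use True uv in \<open>simp add: c_def lv_def\<close>)
    have c2: "k (snd p) \<le> k (fst p) + w"
      by (rule close_levels[OF tp _ wd2]) (use Estar_sym[OF True] uv in \<open>simp add: c_def lv_def\<close>)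
    have b1: "bl (fst p) \<le> Suc (bl (snd p))" unfolding bl_def by (rule div_close[OF c1 w0])
    have b2: "bl (snd p) \<le> Suc (bl (fst p))" unfolding bl_def by (rule div_close[OF c2 w0])
    have "cT p - cC p = 1" unfolding cT_def cC_def T_def C_def
      using count_lemma[OF b1 b2 blK blK] pV uv by (auto simp: mem_Times_iff)
    then show ?thesis by (simp add: algebra_simps flip: right_diff_distrib)
  qed
  have ident: "restricted_form V A (Estar d) c c =
      (\<Sum>t\<in>{..K}. restricted_form V A (Estar d) (lv (T t) k \<tau>) (lv (T t) k \<tau>))
    - (\<Sum>t\<in>{..K}. restricted_form V A (Estar d) (lv (C t) k \<tau>) (lv (C t) k \<tau>))"
    unfolding sT sC rfQ sum_subtractf[symmetric] by (rule sum.cong) (auto simp: pt)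
  have nrmQ: "nrmf V c = (\<Sum>v\<in>V. (c v)^2)" unfolding nrmf_def ..
  have nrm_mono: "nrmf V (lv X k \<tau>) \<le> nrmf V c" if "X \<subseteq> Q" for X
    unfolding c_def nrmf_def by (rule sum_mono) (use that in \<open>auto simp: lv_def\<close>)
  have ratio_of: "(2::real)^(k u) \<le> real d * 2^(k v)" if "bl u \<le> Suc (bl v)" for u v
    by (rule pow_ratio[OF block_span[OF that[unfolded bl_def] w0] wd1])
  have bT: "\<bar>restricted_form V A (Estar d) (lv (T t) k \<tau>) (lv (T t) k \<tau>)\<bar> \<le> 2/5 * S * nrmf V (lv (T t) k \<tau>)" for t
    unfolding V_def \<tau>_def
  proof (rule scale_bound[OF hp np _ _ _ SZ])
    show "T t \<subseteq> lift_vertices h n" using TQ QV by blast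
    show "nrmf (lift_vertices h n) (lv (T t) k (1 / sqrt (real n * real h))) \<le> 10"
      using nrm_mono[OF TQ, of t] nb unfolding V_def \<tau>_def c_def by linarith
    fix u v assume "u \<in> T t" "v \<in> T t"
    then have "bl u \<le> Suc (bl v)" unfolding T_def by auto
    then show "(2::real)^(k u) \<le> real d * 2^(k v)" by (rule ratio_of)
  qed
  have bC: "\<bar>restricted_form V A (Estar d) (lv (C t) k \<tau>) (lv (C t) k \<tau>)\<bar> \<le> 2/5 * S * nrmf V (lv (C t) k \<tau>)" for t
    unfolding V_def \<tau>_def
  proof (rule scale_bound[OF hp np _ _ _ SZ])
    show "C t \<subseteq> lift_vertices h n" using CQ QV by blast
    show "nrmf (lift_vertices h n) (lv (C t) k (1 / sqrt (real n * real h))) \<le> 10"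
      using nrm_mono[OF CQ, of t] nb unfolding V_def \<tau>_def c_def by linarith
    fix u v assume "u \<in> C t" "v \<in> C t"
    then have "bl u \<le> Suc (bl v)" unfolding C_def by auto
    then show "(2::real)^(k u) \<le> real d * 2^(k v)" by (rule ratio_of)
  qed
  have sumT: "(\<Sum>t\<in>{..K}. nrmf V (lv (T t) k \<tau>)) \<le> 2 * nrmf V c"
  proof -
    have "(\<Sum>t\<in>{..K}. nrmf V (lv (T t) k \<tau>)) = (\<Sum>v\<in>V. (c v)^2 * (\<Sum>t\<in>{..K}. if v \<in> T t then 1 else 0))"
      unfolding nrm_sub[OF TQ] c_def by (subst sum.swap) (simp add: sum_distrib_left)
    also have "\<dots> \<le> (\<Sum>v\<in>V. (c v)^2 * 2)"
    proof (rule sum_mono)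
      fix v
      have "(\<Sum>t\<in>{..K}. if v \<in> T t then 1 else 0::real) \<le> (\<Sum>t\<in>{..K}. if bl v = t \<or> Suc (bl v) = t then 1 else 0)"
        by (rule sum_mono) (auto simp: T_def)
      also have "\<dots> \<le> 2" by (rule count_le2)
      finally show "(c v)^2 * (\<Sum>t\<in>{..K}. if v \<in> T t then 1 else 0) \<le> (c v)^2 * 2"
        by (rule mult_left_mono) simp
    qed
    finally show ?thesis unfolding nrmQ by (simp add: sum_distrib_left mult.commute)
  qed
  have sumC: "(\<Sum>t\<in>{..K}. nrmf V (lv (C t) k \<tau>)) \<le> nrmf V c"
  proof -
    have "(\<Sum>t\<in>{..K}. nrmf V (lv (C t) k \<tau>)) = (\<Sum>v\<in>V. (c v)^2 * (\<Sum>t\<in>{..K}. if v \<in> C t then 1 else 0))"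
      unfolding nrm_sub[OF CQ] c_def by (subst sum.swap) (simp add: sum_distrib_left)
    also have "\<dots> \<le> (\<Sum>v\<in>V. (c v)^2 * 1)"
    proof (rule sum_mono)
      fix v
      have "(\<Sum>t\<in>{..K}. if v \<in> C t then 1 else 0::real) \<le> (\<Sum>t\<in>{..K}. if bl v = t then 1 else 0)"
        by (rule sum_mono) (auto simp: C_def)
      also have "\<dots> \<le> 1" by (rule count_le1)
      finally show "(c v)^2 * (\<Sum>t\<in>{..K}. if v \<in> C t then 1 else 0) \<le> (c v)^2 * 1"
        by (rule mult_left_mono) simp
    qed
    finally show ?thesis unfolding nrmQ by simp
  qed
  have "\<bar>restricted_form V A (Estar d) c c\<bar> \<le>
      (\<Sum>t\<in>{..K}. \<bar>restricted_form V A (Estar d) (lv (T t) k \<tau>) (lv (T t) k \<tau>)\<bar>)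
    + (\<Sum>t\<in>{..K}. \<bar>restricted_form V A (Estar d) (lv (C t) k \<tau>) (lv (C t) k \<tau>)\<bar>)"
    unfolding ident
    by (rule order_trans[OF abs_triangle_ineq4 add_mono[OF sum_abs sum_abs]])
  also have "\<dots> \<le> (\<Sum>t\<in>{..K}. 2/5 * S * nrmf V (lv (T t) k \<tau>)) + (\<Sum>t\<in>{..K}. 2/5 * S * nrmf V (lv (C t) k \<tau>))"
    by (intro add_mono sum_mono bT bC)
  also have "\<dots> = 2/5 * S * ((\<Sum>t\<in>{..K}. nrmf V (lv (T t) k \<tau>)) + (\<Sum>t\<in>{..K}. nrmf V (lv (C t) k \<tau>)))"
    by (simp add: sum_distrib_left distrib_left)
  also have "\<dots> \<le> 2/5 * S * (2 * nrmf V c + nrmf V c)"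
    by (rule mult_left_mono) (use sumT sumC S0 in auto)
  finally show ?thesis unfolding V_def \<tau>_def c_def by simp
qed



lemma ceil_pow:
  fixes q :: real
  assumes q: "q > 1/2"
  shows "q \<le> 2^(nat \<lceil>log 2 q\<rceil>) \<and> 2^(nat \<lceil>log 2 q\<rceil>) < 2 * q"
proof -
  let ?L = "log 2 q"
  have qp: "q > 0" using q by simp
  have "log 2 (1/2) < ?L" using q qp by (subst log_less_cancel_iff) auto
  then have Lg: "?L > -1" by (simp add: log_divide)
  have c: "of_int \<lceil>?L\<rceil> - 1 < ?L" "?L \<le> of_int \<lceil>?L\<rceil>" using ceiling_correct by auto
  have c0: "\<lceil>?L\<rceil> \<ge> 0" using Lg c by linarith
  have eq: "(2::real)^(nat \<lceil>?L\<rceil>) = 2 powr (of_int \<lceil>?L\<rceil>)"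
    using c0 by (simp add: powr_realpow[symmetric])
  have "q = 2 powr ?L" using qp by simp
  also have "\<dots> \<le> 2 powr (of_int \<lceil>?L\<rceil>)" by (rule powr_mono[OF c(2)]) simp
  finally have 1: "q \<le> 2^(nat \<lceil>?L\<rceil>)" using eq by simp
  have "2 powr (of_int \<lceil>?L\<rceil>) < 2 powr (?L + 1)" by (rule powr_less_mono) (use c in auto)
  also have "\<dots> = 2 * q" using qp by (simp add: powr_add)
  finally have 2: "2^(nat \<lceil>?L\<rceil>) < 2 * q" using eq by simp
  show ?thesis using 1 2 by simp
qed

lemma nat_lt_two_pow': "real (m::nat) < 2^m"
proof (induction m)
  case 0 show ?case by simp
next
  case (Suc m)
  have "(1::real) \<le> 2^m" by (rule one_le_power) simp
  moreover have "real (Suc m) = real m + 1" by simp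
  moreover have "(2::real)^(Suc m) = 2 * 2^m" by simp
  ultimately show ?case using Suc.IH by linarith
qed

lemma exists_w:
  fixes d :: nat
  assumes "d \<ge> 2"
  shows "\<exists>w. w > 0 \<and> (2::real)^(2*w-1) \<le> real d \<and> real d < 2^(2*w+1)"
proof -
  have ex: "real d < 2^(2*d+1)"
  proof -
    have "real d < 2^d" by (rule nat_lt_two_pow')
    also have "(2::real)^d \<le> 2^(2*d+1)" by (rule power_increasing) auto
    finally show ?thesis .
  qed
  define m where "m = (LEAST m::nat. real d < 2^(2*m+1))"
  have m: "real d < 2^(2*m+1)" unfolding m_def by (rule LeastI[of _ d]) (rule ex)
  have m0: "m \<noteq> 0" using m assms by (intro notI) simp
  then obtain j where j: "m = Suc j" by (cases m) auto
  have "\<not> real d < 2^(2*j+1)" using j unfolding m_def by (metis lessI not_less_Least)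
  then have "(2::real)^(2*m-1) \<le> real d" using j by simp
  then show ?thesis using m m0 by auto
qed



lemma card_lift: "card (lift_vertices h n) = h * n"
  unfolding lift_vertices_def by (simp add: card_cartesian_product)

lemma round_facts:
  fixes xv \<tau> :: real and kv :: nat
  assumes tp: "\<tau> > 0"
  defines "m \<equiv> 2^kv * \<tau>"
  assumes big: "\<bar>xv\<bar> \<le> m" "m < 2 * \<bar>xv\<bar>"
  defines "yv \<equiv> (if xv > 0 then m else - m)"
  shows "yv^2 \<le> 4 * xv^2" "(xv - yv)^2 \<le> yv^2 / 4" "yv^2 \<ge> xv^2"
proof -
  have m0: "m > 0" unfolding m_def using tp by simp
  have ym: "yv^2 = m^2" unfolding yv_def by simp
  have xm: "xv^2 \<le> m^2" using big(1) by (metis abs_ge_zero power2_abs power_mono)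
  have m2: "m^2 \<le> (2 * \<bar>xv\<bar>)^2" using big(2) m0 by (intro power_mono) auto
  show "yv^2 \<le> 4 * xv^2" using ym m2 by (simp add: power_mult_distrib)
  show "yv^2 \<ge> xv^2" using ym xm by simp
  have "\<bar>xv - yv\<bar> = m - \<bar>xv\<bar>" unfolding yv_def using big by auto
  moreover have "m - \<bar>xv\<bar> \<le> m / 2" using big by simp
  moreover have "0 \<le> m - \<bar>xv\<bar>" using big by simp
  ultimately have "\<bar>xv - yv\<bar> \<le> m / 2" by simp
  then have "(xv - yv)^2 \<le> (m/2)^2" by (metis abs_ge_zero power2_abs power_mono)
  then show "(xv - yv)^2 \<le> yv^2 / 4" using ym by (simp add: power_divide)
qed



lemma core:
  fixes h n d :: nat and A :: "nat\<times>nat \<Rightarrow> nat\<times>nat \<Rightarrow> real" and S \<mu> \<theta> :: real and x :: "nat\<times>nat \<Rightarrow> real"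
  assumes hp: "h > 0" and np: "n > 0" and d2: "d \<ge> 2"
    and sym: "\<And>u v. A u v = A v u"
    and row: "\<And>u. u \<in> lift_vertices h n \<Longrightarrow> (\<Sum>v\<in>lift_vertices h n. \<bar>A u v\<bar>) \<le> 2 * real d"
    and SZ: "\<And>z. z \<in> Zset h n d \<Longrightarrow> \<bar>restricted_form (lift_vertices h n) A (Estar d) z z\<bar> \<le> S"
    and mu0: "\<mu> \<ge> 0" and mud: "\<mu> \<le> 2 * real d"
    and muB: "\<And>z. \<bar>bilf (lift_vertices h n) A z z\<bar> \<le> \<mu> * nrmf (lift_vertices h n) z"
    and th0: "\<theta> > 0" and th1: "\<theta> \<le> 1"
    and nx: "nrmf (lift_vertices h n) x = 5/2"
    and bx: "bilf (lift_vertices h n) A x x \<ge> 5/2 * (\<mu> - \<theta>^2)"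
  shows "\<mu> \<le> 18/5 * (4 * sqrt (real d) + 18/5 * S) + 8/5 * \<theta> * (5 + 11 * real d)"
proof -
  define V where "V = lift_vertices h n"
  define \<tau> where "\<tau> = 1 / sqrt (real n * real h)"
  have fin: "finite V" unfolding V_def by (rule lift_fin)
  have tp: "\<tau> > 0" unfolding \<tau>_def using hp np by simp
  have S0: "S \<ge> 0" by (rule S_nonneg[OF hp np SZ])
  have tau2: "real (card V) * \<tau>^2 = 1"
    unfolding V_def \<tau>_def card_lift using hp np by (simp add: power_divide)
  obtain w where w0: "w > 0" and wd1: "(2::real)^(2*w-1) \<le> real d" and wd2: "real d < 2^(2*w+1)"
    using exists_w[OF d2] by blast
  define P where "P = {v\<in>V. \<bar>x v\<bar> > \<tau>/2}"
  define k where "k v = nat \<lceil>log 2 (\<bar>x v\<bar> / \<tau>)\<rceil>" for v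
  define Pp where "Pp = {v\<in>P. x v > 0}"
  define Pm where "Pm = {v\<in>P. x v < 0}"
  define y where "y v = lv Pp k \<tau> v - lv Pm k \<tau> v" for v
  define r where "r v = x v - y v" for v
  have PV: "P \<subseteq> V" unfolding P_def by auto
  have PpV: "Pp \<subseteq> V" and PmV: "Pm \<subseteq> V" unfolding Pp_def Pm_def using PV by auto
  have kP: "\<bar>x v\<bar> \<le> 2^(k v) * \<tau> \<and> 2^(k v) * \<tau> < 2 * \<bar>x v\<bar>" if "v \<in> P" for v
  proof -
    have q: "\<bar>x v\<bar> / \<tau> > 1/2" using that tp unfolding P_def by (simp add: field_simps)
    from ceil_pow[OF q] have "\<bar>x v\<bar> / \<tau> \<le> 2^(k v)" "2^(k v) < 2 * (\<bar>x v\<bar> / \<tau>)"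
      unfolding k_def by auto
    then show ?thesis using tp by (simp add: field_simps)
  qed
  have yP: "y v = (if x v > 0 then 2^(k v) * \<tau> else - (2^(k v) * \<tau>))" if "v \<in> P" for v
  proof -
    have "x v \<noteq> 0" using that tp unfolding P_def by auto
    then show ?thesis using that unfolding y_def lv_def Pp_def Pm_def by auto
  qed
  have ynP: "y v = 0" if "v \<notin> P" for v
    using that unfolding y_def lv_def Pp_def Pm_def by auto
  have fall: "(y v)^2 \<le> 4 * (x v)^2 \<and> (r v)^2 \<le> (y v)^2 / 4 + \<tau>^2/4 \<and> (y v)^2 \<ge> (x v)^2 - \<tau>^2/4"
    if vV: "v \<in> V" for v
  proof (cases "v \<in> P")
    case True
    note rf = round_facts[OF tp kP[OF True, THEN conjunct1] kP[OF True, THEN conjunct2]]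
    have t0: "\<tau>^2/4 \<ge> 0" by simp
    show ?thesis using rf yP[OF True] t0 unfolding r_def by (smt (verit))
  next
    case False
    have xs: "\<bar>x v\<bar> \<le> \<tau>/2" using False vV unfolding P_def by auto
    have "(x v)^2 \<le> (\<tau>/2)^2" using xs by (metis abs_ge_zero power2_abs power_mono)
    then show ?thesis using ynP[OF False] unfolding r_def by (simp add: power_divide)
  qed
  define Y where "Y = nrmf V y"
  define R where "R = nrmf V r"
  have sumtau: "(\<Sum>v\<in>V. \<tau>^2/4) = 1/4" using tau2 by simp
  have Yle: "Y \<le> 10"
  proof -
    have "Y \<le> (\<Sum>v\<in>V. 4 * (x v)^2)" unfolding Y_def nrmf_def by (rule sum_mono) (use fall in blast)
    also have "\<dots> = 4 * (5/2)" using nx unfolding V_def nrmf_def by (simp add: sum_distrib_left[symmetric])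
    finally show ?thesis by simp
  qed
  have Yge: "Y \<ge> 9/4"
  proof -
    have "(\<Sum>v\<in>V. (x v)^2 - \<tau>^2/4) \<le> Y" unfolding Y_def nrmf_def by (rule sum_mono) (use fall in blast)
    moreover have "(\<Sum>v\<in>V. (x v)^2 - \<tau>^2/4) = 5/2 - 1/4"
      using nx sumtau unfolding V_def nrmf_def by (simp add: sum_subtractf)
    ultimately show ?thesis by simp
  qed
  have Rle: "R \<le> Y/4 + 1/4"
  proof -
    have "R \<le> (\<Sum>v\<in>V. (y v)^2 / 4 + \<tau>^2/4)" unfolding R_def nrmf_def by (rule sum_mono) (use fall in blast)
    also have "\<dots> = Y/4 + 1/4" using sumtau unfolding Y_def nrmf_def by (simp add: sum.distrib sum_divide_distrib)
    finally show ?thesis .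
  qed
  have ymax: "(\<lambda>v. max (y v) 0) = lv Pp k \<tau>" and ymin: "(\<lambda>v. max (- y v) 0) = lv Pm k \<tau>"
    and yabs: "(\<lambda>v. \<bar>y v\<bar>) = lv P k \<tau>"
    using tp unfolding y_def lv_def Pp_def Pm_def P_def by (auto simp: fun_eq_iff)
  have nsplit: "nrmf V (lv Pp k \<tau>) + nrmf V (lv Pm k \<tau>) = Y"
    unfolding Y_def nrmf_def sum.distrib[symmetric]
    by (rule sum.cong) (auto simp: y_def lv_def Pp_def Pm_def)
  have nP: "nrmf V (lv P k \<tau>) = Y" unfolding Y_def nrmf_def yabs[symmetric] by simp
  have np0: "nrmf V (lv Pp k \<tau>) \<ge> 0" "nrmf V (lv Pm k \<tau>) \<ge> 0" by (rule nrm_nonneg)+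
  have wb: "\<bar>restricted_form V A (Estar d) (lv X k \<tau>) (lv X k \<tau>)\<bar> \<le> 6/5 * S * nrmf V (lv X k \<tau>)"
    if "X \<subseteq> V" "nrmf V (lv X k \<tau>) \<le> 10" for X
    unfolding V_def \<tau>_def
    by (rule window_bound[OF hp np _ w0 wd1 wd2 _ SZ]) (use that in \<open>simp_all add: V_def \<tau>_def\<close>)
  have wp: "\<bar>restricted_form V A (Estar d) (lv Pp k \<tau>) (lv Pp k \<tau>)\<bar> \<le> 6/5 * S * nrmf V (lv Pp k \<tau>)"
    by (rule wb[OF PpV]) (use nsplit np0 Yle in linarith)
  have wm: "\<bar>restricted_form V A (Estar d) (lv Pm k \<tau>) (lv Pm k \<tau>)\<bar> \<le> 6/5 * S * nrmf V (lv Pm k \<tau>)"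
    by (rule wb[OF PmV]) (use nsplit np0 Yle in linarith)
  have wa: "\<bar>restricted_form V A (Estar d) (lv P k \<tau>) (lv P k \<tau>)\<bar> \<le> 6/5 * S * Y"
    using wb[OF PV] nP Yle by simp
  have rowV: "\<And>u. u \<in> V \<Longrightarrow> (\<Sum>v\<in>V. \<bar>A u v\<bar>) \<le> 2 * real d" unfolding V_def by (rule row)
  have far: "\<bar>farsum V A d y\<bar> \<le> 4 * sqrt (real d) * Y"
    unfolding Y_def using far_bound[OF fin sym rowV, of y] d2 by simp
  define K0 where "K0 = 4 * sqrt (real d) + 18/5 * S"
  have byy: "bilf V A y y \<le> K0 * Y"
  proof -
    have e: "bilf V A y y = farsum V A d y + 2 * restricted_form V A (Estar d) (lv Pp k \<tau>) (lv Pp k \<tau>)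
       + 2 * restricted_form V A (Estar d) (lv Pm k \<tau>) (lv Pm k \<tau>)
       - restricted_form V A (Estar d) (lv P k \<tau>) (lv P k \<tau>)"
      using decomp[OF fin, of A y d] unfolding ymax ymin yabs .
    have "bilf V A y y \<le> 4 * sqrt (real d) * Y + 2 * (6/5 * S * nrmf V (lv Pp k \<tau>))
       + 2 * (6/5 * S * nrmf V (lv Pm k \<tau>)) + 6/5 * S * Y"
      unfolding e using far wp wm wa by linarith
    also have "\<dots> = 4 * sqrt (real d) * Y + 12/5 * S * (nrmf V (lv Pp k \<tau>) + nrmf V (lv Pm k \<tau>)) + 6/5 * S * Y"
      by (simp add: algebra_simps)
    also have "\<dots> = K0 * Y" unfolding nsplit K0_def by (simp add: algebra_simps)
    finally show ?thesis .
  qed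
  have hy: "y = (\<lambda>v. x v + (-1) * r v)" unfolding r_def by (simp add: fun_eq_iff)
  have byexp: "bilf V A y y = bilf V A x x - 2 * bilf V A x r + bilf V A r r"
    unfolding hy quad_expand[OF sym] by simp
  have Yexp: "Y = nrmf V x - 2 * ipf V x r + R"
    unfolding Y_def R_def hy nrm_expand by simp
  have nxV: "nrmf V x = 5/2" using nx unfolding V_def .
  have bxV: "bilf V A x x \<ge> 5/2 * (\<mu> - \<theta>^2)" using bx unfolding V_def .
  have muBV: "\<And>z. \<bar>bilf V A z z\<bar> \<le> \<mu> * nrmf V z" unfolding V_def by (rule muB)
  have brr: "- (\<mu> * R) \<le> bilf V A r r" using muBV[of r] unfolding R_def by linarith
  define D where "D = \<mu> * nrmf V x - bilf V A x x"
  define G where "G = \<mu> * R - bilf V A r r"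
  define E1 where "E1 = bilf V A x r - \<mu> * ipf V x r"
  have Dle: "D \<le> 5/2 * \<theta>^2" unfolding D_def using nxV bxV by (simp add: algebra_simps)
  have Gle: "G \<le> 2 * \<mu> * R" unfolding G_def using brr by (simp add: mult.commute)
  have pert: "2 * \<theta> * E1 \<le> D + \<theta>^2 * G" "- (2 * \<theta> * E1) \<le> D + \<theta>^2 * G"
  proof -
    have a: "bilf V A (\<lambda>v. x v + s * r v) (\<lambda>v. x v + s * r v) \<le> \<mu> * nrmf V (\<lambda>v. x v + s * r v)" for s
      using muBV by (meson abs_ge_self order_trans)
    have "bilf V A x x + 2 * s * bilf V A x r + s^2 * bilf V A r r \<le> \<mu> * (nrmf V x + 2 * s * ipf V x r + s^2 * R)" for s
      using a[of s] unfolding quad_expand[OF sym] nrm_expand R_def .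
    note i1 = this[of \<theta>] and i2 = this[of "-\<theta>"]
    have id1: "D + \<theta>^2 * G - 2 * \<theta> * E1 = \<mu> * (nrmf V x + 2 * \<theta> * ipf V x r + \<theta>^2 * R)
        - (bilf V A x x + 2 * \<theta> * bilf V A x r + \<theta>^2 * bilf V A r r)"
      unfolding D_def G_def E1_def by algebra
    have id2: "D + \<theta>^2 * G + 2 * \<theta> * E1 = \<mu> * (nrmf V x + 2 * (-\<theta>) * ipf V x r + (-\<theta>)^2 * R)
        - (bilf V A x x + 2 * (-\<theta>) * bilf V A x r + (-\<theta>)^2 * bilf V A r r)"
      unfolding D_def G_def E1_def by algebra
    show "2 * \<theta> * E1 \<le> D + \<theta>^2 * G" using i1 id1 by linarith
    show "- (2 * \<theta> * E1) \<le> D + \<theta>^2 * G" using i2 id2 by linarith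
  qed
  have E1b: "2 * \<bar>E1\<bar> \<le> D / \<theta> + \<theta> * G"
  proof -
    have "2 * \<theta> * \<bar>E1\<bar> \<le> D + \<theta>^2 * G" using pert by (cases "E1 \<ge> 0") simp_all
    then have "2 * \<bar>E1\<bar> \<le> (D + \<theta>^2 * G) / \<theta>" using th0 by (simp add: field_simps)
    also have "\<dots> = D / \<theta> + \<theta> * G" using th0 by (simp add: field_simps power2_eq_square)
    finally show ?thesis .
  qed
  have main1: "\<mu> * (Y - 2 * R) \<le> bilf V A y y + D + 2 * \<bar>E1\<bar>"
  proof -
    have "\<mu> * (Y - 2 * R) = \<mu> * nrmf V x - 2 * \<mu> * ipf V x r - \<mu> * R"
      unfolding Yexp by (simp add: algebra_simps)
    moreover have "bilf V A y y = bilf V A x x - 2 * bilf V A x r + bilf V A r r" by (rule byexp)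
    ultimately have "\<mu> * (Y - 2 * R) - bilf V A y y = D + 2 * E1 - \<mu> * R - bilf V A r r"
      unfolding D_def E1_def by (simp add: algebra_simps)
    moreover have "E1 \<le> \<bar>E1\<bar>" by simp
    ultimately show ?thesis using brr by linarith
  qed
  have Rle2: "R \<le> 11/4" using Rle Yle by simp
  have R0: "R \<ge> 0" unfolding R_def by (rule nrm_nonneg)
  have err: "D + 2 * \<bar>E1\<bar> \<le> \<theta> * (5 + 11 * real d)"
  proof -
    have "\<theta> * \<theta> \<le> \<theta> * 1" by (rule mult_left_mono[OF th1]) (use th0 in simp)
    then have "\<theta>^2 \<le> \<theta>" by (simp add: power2_eq_square)
    then have D2: "D \<le> 5/2 * \<theta>" using Dle by linarith
    have D3: "D / \<theta> \<le> 5/2 * \<theta>" using Dle th0 by (simp add: field_simps power2_eq_square)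
    have "G \<le> 2 * (2 * real d) * (11/4)"
    proof -
      have "\<mu> * R \<le> (2 * real d) * (11/4)" by (rule mult_mono[OF mud Rle2]) (use R0 d2 in auto)
      then show ?thesis using Gle by simp
    qed
    then have "\<theta> * G \<le> \<theta> * (11 * real d)" using th0 by (simp add: mult_left_mono)
    moreover have "\<theta> * (5 + 11 * real d) = 5/2 * \<theta> + 5/2 * \<theta> + \<theta> * (11 * real d)"
      by (simp add: algebra_simps)
    ultimately show ?thesis using E1b D2 D3 by linarith
  qed
  have Ypos: "Y > 0" using Yge by simp
  have low: "5/18 * Y \<le> Y - 2 * R" using Rle Yge by simp
  have "\<mu> * (5/18 * Y) \<le> \<mu> * (Y - 2 * R)" by (rule mult_left_mono[OF low mu0])
  also have "\<dots> \<le> K0 * Y + \<theta> * (5 + 11 * real d)" using main1 byy err by linarith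
  finally have A1: "\<mu> * Y \<le> 18/5 * K0 * Y + 18/5 * (\<theta> * (5 + 11 * real d))" by simp
  have "18/5 * (\<theta> * (5 + 11 * real d)) \<le> 8/5 * (\<theta> * (5 + 11 * real d)) * Y"
  proof -
    have "0 \<le> \<theta> * (5 + 11 * real d)" using th0 by simp
    from mult_left_mono[OF Yge this] show ?thesis by (simp add: algebra_simps)
  qed
  with A1 have "\<mu> * Y \<le> (18/5 * K0 + 8/5 * \<theta> * (5 + 11 * real d)) * Y" by (simp add: algebra_simps)
  then have "\<mu> \<le> 18/5 * K0 + 8/5 * \<theta> * (5 + 11 * real d)" using Ypos by simp
  then show ?thesis unfolding K0_def .
qed



lemma sum_prod_nested: "finite A \<Longrightarrow> finite B \<Longrightarrow> (\<Sum>v\<in>A\<times>B. f v) = (\<Sum>a\<in>A. \<Sum>b\<in>B. f (a, b))"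
  by (simp add: sum.cartesian_product)

lemma N_sym:
  assumes "d_regular_graph h d E" "is_lift h n E G"
  shows "Nmat n E G u v = Nmat n E G v u"
proof -
  have "G u v = G v u" using assms(2) unfolding is_lift_def by blast
  moreover have "E (fst u) (fst v) = E (fst v) (fst u)" using assms(1) unfolding d_regular_graph_def by blast
  ultimately show ?thesis unfolding Nmat_def adjM_def Mbar_def by simp
qed

lemma adj_row:
  assumes reg: "d_regular_graph h d E" and lift: "is_lift h n E G" and u: "u \<in> lift_vertices h n"
  shows "(\<Sum>v\<in>lift_vertices h n. adjM G u v) \<le> real d"
proof -
  obtain i j where uij: "u = (i, j)" and ih: "i < h" using u unfolding lift_vertices_def by auto
  let ?B = "{v\<in>lift_vertices h n. G u v}"
  have "(\<Sum>v\<in>lift_vertices h n. adjM G u v) = real (card ?B)"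
  proof -
    have "?B = lift_vertices h n \<inter> Collect (G u)" by auto
    then show ?thesis unfolding adjM_def using lift_fin[of h n] by (simp add: sum.If_cases)
  qed
  also have "card ?B \<le> card {i'. i' < h \<and> E i i'}"
  proof (rule card_inj_on_le)
    show "inj_on fst ?B"
    proof (rule inj_onI)
      fix a b assume a: "a \<in> ?B" and b: "b \<in> ?B" and ab: "fst a = fst b"
      obtain a1 a2 where aa: "a = (a1, a2)" by (cases a)
      obtain b1 b2 where bb: "b = (b1, b2)" by (cases b)
      have Ga: "G (i, j) (a1, a2)" and Gb: "G (i, j) (a1, b2)" using a b ab uij aa bb by auto
      have Eia: "E i a1" using Ga lift unfolding is_lift_def by blast
      have jn: "j < n" using u uij unfolding lift_vertices_def by auto
      have a2n: "a2 < n" and b2n: "b2 < n" using a b aa bb ab unfolding lift_vertices_def by auto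
      have "\<exists>!j'. j' < n \<and> G (i, j) (a1, j')" using lift Eia jn unfolding is_lift_def by blast
      then have "a2 = b2" using Ga Gb a2n b2n by blast
      then show "a = b" using aa bb ab by simp
    qed
    show "fst ` ?B \<subseteq> {i'. i' < h \<and> E i i'}"
    proof
      fix z assume "z \<in> fst ` ?B"
      then obtain v where v: "v \<in> ?B" "z = fst v" by auto
      obtain v1 v2 where vv: "v = (v1, v2)" by (cases v)
      have "G (i, j) (v1, v2)" using v vv uij by auto
      then have "E i v1" using lift unfolding is_lift_def by blast
      moreover have "v1 < h" using v vv unfolding lift_vertices_def by auto
      ultimately show "z \<in> {i'. i' < h \<and> E i i'}" using v vv by simp
    qed
    show "finite {i'. i' < h \<and> E i i'}" by simp
  qed
  also have "card {i'. i' < h \<and> E i i'} = d" using reg ih unfolding d_regular_graph_def by blast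
  finally show ?thesis by simp
qed

lemma Mbar_row:
  assumes reg: "d_regular_graph h d E" and u: "u \<in> lift_vertices h n"
  shows "(\<Sum>v\<in>lift_vertices h n. Mbar n E u v) = real d"
proof -
  obtain i j where uij: "u = (i, j)" and ih: "i < h" and jn: "j < n" using u unfolding lift_vertices_def by auto
  have "(\<Sum>v\<in>lift_vertices h n. Mbar n E u v) = (\<Sum>i'\<in>{0..<h}. \<Sum>j'\<in>{0..<n}. if E i i' then 1 / real n else 0)"
    unfolding lift_vertices_def Mbar_def uij by (subst sum_prod_nested) simp_all
  also have "\<dots> = (\<Sum>i'\<in>{0..<h}. if E i i' then 1 else 0)"
    using jn by (intro sum.cong) auto
  also have "\<dots> = real (card {i'. i' < h \<and> E i i'})"
  proof -
    have "{i'. i' < h \<and> E i i'} = {0..<h} \<inter> Collect (E i)" by auto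
    then show ?thesis by (simp add: sum.If_cases)
  qed
  also have "card {i'. i' < h \<and> E i i'} = d" using reg ih unfolding d_regular_graph_def by blast
  finally show ?thesis .
qed

lemma N_row:
  assumes reg: "d_regular_graph h d E" and lift: "is_lift h n E G" and u: "u \<in> lift_vertices h n"
  shows "(\<Sum>v\<in>lift_vertices h n. \<bar>Nmat n E G u v\<bar>) \<le> 2 * real d"
proof -
  have "(\<Sum>v\<in>lift_vertices h n. \<bar>Nmat n E G u v\<bar>) \<le> (\<Sum>v\<in>lift_vertices h n. adjM G u v + Mbar n E u v)"
  proof (rule sum_mono)
    fix v
    have "adjM G u v \<ge> 0" "Mbar n E u v \<ge> 0" unfolding adjM_def Mbar_def by auto
    then show "\<bar>Nmat n E G u v\<bar> \<le> adjM G u v + Mbar n E u v" unfolding Nmat_def by linarith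
  qed
  also have "\<dots> \<le> real d + real d"
    unfolding sum.distrib using adj_row[OF reg lift u] Mbar_row[OF reg u] by linarith
  finally show ?thesis by simp
qed

lemma bil_diff: "bilf V (\<lambda>u v. A u v - B u v) x x = bilf V A x x - bilf V B x x"
  unfolding bilf_def by (simp add: algebra_simps sum_subtractf)

lemma eigen_quad:
  assumes xs: "x \<in> new_space h n"
    and ev: "\<forall>u\<in>lift_vertices h n. mat_vec (lift_vertices h n) (adjM G) x u = lam * x u"
  shows "bilf (lift_vertices h n) (Nmat n E G) x x = lam * nrmf (lift_vertices h n) x"
proof -
  let ?V = "lift_vertices h n"
  have "bilf ?V (adjM G) x x = (\<Sum>u\<in>?V. x u * mat_vec ?V (adjM G) x u)"
    unfolding bilf_def mat_vec_def by (simp add: sum_distrib_left mult.assoc)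
  also have "\<dots> = (\<Sum>u\<in>?V. lam * (x u)^2)"
    using ev by (intro sum.cong) (auto simp: power2_eq_square)
  finally have a: "bilf ?V (adjM G) x x = lam * nrmf ?V x" unfolding nrmf_def by (simp add: sum_distrib_left)
  have inner0: "(\<Sum>v\<in>?V. Mbar n E u v * x v) = 0" for u
  proof -
    have "(\<Sum>v\<in>?V. Mbar n E u v * x v) = (\<Sum>i'\<in>{0..<h}. \<Sum>j'\<in>{0..<n}. Mbar n E u (i', j') * x (i', j'))"
      unfolding lift_vertices_def by (subst sum_prod_nested) simp_all
    also have "\<dots> = (\<Sum>i'\<in>{0..<h}. (if E (fst u) i' then 1 / real n else 0) * (\<Sum>j'\<in>{0..<n}. x (i', j')))"
      unfolding Mbar_def by (simp add: sum_distrib_left)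
    also have "\<dots> = 0"
    proof (rule sum.neutral, rule ballI)
      fix i' assume "i' \<in> {0..<h}"
      then have "(\<Sum>v\<in>fibre n i'. x v) = 0" using xs unfolding new_space_def by auto
      moreover have "(\<Sum>v\<in>fibre n i'. x v) = (\<Sum>j'\<in>{0..<n}. x (i', j'))"
        unfolding fibre_def by (subst sum_prod_nested) simp_all
      ultimately show "(if E (fst u) i' then 1 / real n else 0) * (\<Sum>j'\<in>{0..<n}. x (i', j')) = 0" by simp
    qed
    finally show ?thesis .
  qed
  have b: "bilf ?V (Mbar n E) x x = 0"
    unfolding bilf_def using inner0 by (simp add: mult.assoc sum_distrib_left[symmetric])
  have "Nmat n E G = (\<lambda>u v. adjM G u v - Mbar n E u v)" unfolding Nmat_def by (simp add: fun_eq_iff)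
  then show ?thesis using a b bil_diff by simp
qed



lemma bil_scale: "bilf V A (\<lambda>v. c * z v) (\<lambda>v. c * z v) = c^2 * bilf V A z z"
  unfolding bilf_def by (simp add: sum_distrib_left power2_eq_square algebra_simps)
lemma nrm_scale: "nrmf V (\<lambda>v. c * z v) = c^2 * nrmf V z"
  unfolding nrmf_def by (simp add: sum_distrib_left power_mult_distrib)
lemma bil_neg: "bilf V (\<lambda>u v. - A u v) x x = - bilf V A x x"
  unfolding bilf_def by (simp add: sum_negf)
lemma rf_neg: "restricted_form V (\<lambda>u v. - A u v) Es x x = - restricted_form V A Es x x"
  unfolding restricted_form_def by (simp add: sum_negf case_prod_beta)

lemma nrm0_imp: "finite V \<Longrightarrow> nrmf V z = 0 \<Longrightarrow> v \<in> V \<Longrightarrow> z v = 0"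
  unfolding nrmf_def by (subst (asm) sum_nonneg_eq_0_iff) auto

lemma bil_nrm0: "finite V \<Longrightarrow> nrmf V z = 0 \<Longrightarrow> bilf V A z z = 0"
  unfolding bilf_def using nrm0_imp by (simp add: sum.neutral)

lemma eps_lemma:
  fixes \<mu> B C :: real
  assumes C: "C \<ge> 0" and h: "\<And>\<theta>. 0 < \<theta> \<Longrightarrow> \<theta> \<le> 1 \<Longrightarrow> \<mu> \<le> B + C * \<theta>"
  shows "\<mu> \<le> B"
proof (rule field_le_epsilon)
  fix e :: real assume e: "0 < e"
  define \<theta> where "\<theta> = min 1 (e / (C + 1))"
  have t0: "\<theta> > 0" and t1: "\<theta> \<le> 1" unfolding \<theta>_def using e C by auto
  have "C * \<theta> \<le> C * (e / (C + 1))" unfolding \<theta>_def by (rule mult_left_mono[OF _ C]) simp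
  also have "\<dots> \<le> e" using e C by (simp add: field_simps)
  finally show "\<mu> \<le> B + e" using h[OF t0 t1] by linarith
qed

theorem proposition3p3:
  fixes h n d :: nat and E :: "nat \<Rightarrow> nat \<Rightarrow> bool"
    and G :: "nat \<times> nat \<Rightarrow> nat \<times> nat \<Rightarrow> bool"
  assumes "d \<ge> 2"
    and "d_regular_graph h d E"
    and "is_lift h n E G"
  shows "lambda_star h n G \<le>
           96 * (SUP x\<in>Zset h n d.
                   \<bar>restricted_form (lift_vertices h n) (Nmat n E G) (Estar d) x x\<bar>)
           + 480 * sqrt (real d)"
proof -
  note d2 = assms(1) and reg = assms(2) and lift = assms(3)
  define V where "V = lift_vertices h n"
  define N where "N = Nmat n E G"
  define S where "S = (SUP x\<in>Zset h n d. \<bar>restricted_form V N (Estar d) x x\<bar>)"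
  have fin: "finite V" unfolding V_def by (rule lift_fin)
  have symN: "\<And>u v. N u v = N v u" unfolding N_def by (rule N_sym[OF reg lift])
  have rowN: "\<And>u. u \<in> V \<Longrightarrow> (\<Sum>v\<in>V. \<bar>N u v\<bar>) \<le> 2 * real d"
    unfolding V_def N_def by (rule N_row[OF reg lift])
  have Z0: "(\<lambda>_. 0) \<in> Zset h n d" unfolding Zset_def Dplus_def by simp
  have bddZ: "bdd_above ((\<lambda>x. \<bar>restricted_form V N (Estar d) x x\<bar>) ` Zset h n d)"
  proof (rule bdd_aboveI2)
    fix z assume "z \<in> Zset h n d"
    then have "nrmf V z \<le> 10" unfolding Zset_def nrmf_def V_def by auto
    moreover have "\<bar>restricted_form V N (Estar d) z z\<bar> \<le> 2 * real d * nrmf V z"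
      by (rule generic_rf_bound[OF fin symN rowN])
    moreover have "2 * real d * nrmf V z \<le> 2 * real d * 10"
      by (rule mult_left_mono) (use \<open>nrmf V z \<le> 10\<close> in simp_all)
    ultimately show "\<bar>restricted_form V N (Estar d) z z\<bar> \<le> 2 * real d * 10" by linarith
  qed
  have SZ: "\<And>z. z \<in> Zset h n d \<Longrightarrow> \<bar>restricted_form V N (Estar d) z z\<bar> \<le> S"
    unfolding S_def by (rule cSUP_upper[OF _ bddZ])
  have S0: "S \<ge> 0" using SZ[OF Z0] by linarith
  have rhs0: "0 \<le> 96 * S + 480 * sqrt (real d)" using S0 by simp
  show ?thesis
  proof (cases "h > 0 \<and> n > 0")
    case False
    then have Ve: "V = {}" unfolding V_def lift_vertices_def by auto
    have "new_eigenvalues h n G = {}"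
      unfolding new_eigenvalues_def new_space_def using Ve[unfolded V_def] by auto
    then have "lambda_star h n G = 0" unfolding lambda_star_def by simp
    then show ?thesis using rhs0 unfolding S_def V_def N_def by simp
  next
    case True
    then have hp: "h > 0" and np: "n > 0" by auto
    define Rs where "Rs = {\<bar>bilf V N z z\<bar> / nrmf V z | z. nrmf V z \<noteq> 0}"
    define \<mu> where "\<mu> = Sup Rs"
    have v0: "(0, 0) \<in> V" unfolding V_def lift_vertices_def using hp np by simp
    have Rne: "Rs \<noteq> {}"
    proof -
      define z where "z = (\<lambda>v. if v = (0::nat, 0::nat) then (1::real) else 0)"
      have "nrmf V z = (\<Sum>v\<in>V. if v = (0, 0) then 1 else 0)" unfolding nrmf_def z_def by (rule sum.cong) auto
      then have "nrmf V z = 1" using v0 fin by (simp add: sum.delta)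
      then have "nrmf V z \<noteq> 0" by simp
      then show ?thesis unfolding Rs_def by blast
    qed
    have Rle: "r \<le> 2 * real d" if rR0: "r \<in> Rs" for r
    proof -
      obtain z where r: "r = \<bar>bilf V N z z\<bar> / nrmf V z" and nz: "nrmf V z \<noteq> 0" using rR0[unfolded Rs_def] by blast
      have "nrmf V z > 0" using nz nrm_nonneg[of V z] by linarith
      moreover have "\<bar>bilf V N z z\<bar> \<le> 2 * real d * nrmf V z" by (rule generic_bil_bound[OF fin symN rowN])
      ultimately show ?thesis unfolding r by (simp add: field_simps)
    qed
    have bddR: "bdd_above Rs" using Rle by (intro bdd_aboveI) 
    have mud: "\<mu> \<le> 2 * real d" unfolding \<mu>_def by (rule cSup_least[OF Rne]) (rule Rle)
    have Rup: "r \<le> \<mu>" if "r \<in> Rs" for r unfolding \<mu>_def by (rule cSup_upper[OF that bddR])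
    have mu0: "\<mu> \<ge> 0"
    proof -
      obtain r where "r \<in> Rs" using Rne by auto
      moreover then have "r \<ge> 0" using nrm_nonneg \<open>r \<in> Rs\<close>[unfolded Rs_def] by fastforce
      ultimately show ?thesis using Rup by force
    qed
    have muB: "\<bar>bilf V N z z\<bar> \<le> \<mu> * nrmf V z" for z
    proof (cases "nrmf V z = 0")
      case True then show ?thesis using bil_nrm0[OF fin True] by simp
    next
      case False
      then have p: "nrmf V z > 0" using nrm_nonneg[of V z] by linarith
      have "\<bar>bilf V N z z\<bar> / nrmf V z \<le> \<mu>" using False by (intro Rup) (auto simp: Rs_def)
      then show ?thesis using p by (simp add: field_simps)
    qed
    have lam_le: "lambda_star h n G \<le> \<mu>"
      unfolding lambda_star_def
    proof (rule cSup_least)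
      show "insert 0 (abs ` new_eigenvalues h n G) \<noteq> {}" by simp
      fix r assume "r \<in> insert 0 (abs ` new_eigenvalues h n G)"
      then consider "r = 0" | lam where "lam \<in> new_eigenvalues h n G" "r = \<bar>lam\<bar>" by auto
      then show "r \<le> \<mu>"
      proof cases
        case 1 then show ?thesis using mu0 by simp
      next
        case 2
        then obtain x where xs: "x \<in> new_space h n" and xn: "\<exists>v. x v \<noteq> 0"
          and ev: "\<forall>u\<in>lift_vertices h n. mat_vec (lift_vertices h n) (adjM G) x u = lam * x u"
          unfolding new_eigenvalues_def by auto
        have q: "bilf V N x x = lam * nrmf V x" unfolding V_def N_def by (rule eigen_quad[OF xs ev])
        obtain v where v: "x v \<noteq> 0" using xn by auto
        have vV: "v \<in> V" using v xs unfolding new_space_def V_def by (metis (mono_tags, lifting) mem_Collect_eq)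
        have "nrmf V x \<noteq> 0" using nrm0_imp[OF fin _ vV] v by auto
        then have "\<bar>bilf V N x x\<bar> / nrmf V x \<in> Rs" unfolding Rs_def by auto
        moreover have "\<bar>bilf V N x x\<bar> / nrmf V x = \<bar>lam\<bar>"
          using \<open>nrmf V x \<noteq> 0\<close> nrm_nonneg[of V x] unfolding q by (simp add: abs_mult)
        ultimately show ?thesis using Rup 2 by simp
      qed
    qed
    define B where "B = 18/5 * (4 * sqrt (real d) + 18/5 * S)"
    have mu_le: "\<mu> \<le> B"
    proof (rule eps_lemma[of "8/5 * (5 + 11 * real d)"])
      show "0 \<le> 8/5 * (5 + 11 * real d)" by simp
      fix \<theta> :: real assume th0: "0 < \<theta>" and th1: "\<theta> \<le> 1"
      have "\<mu> - \<theta>^2 < Sup Rs" unfolding \<mu>_def[symmetric] using th0 by simp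
      then obtain r where rR: "r \<in> Rs" and rgt: "\<mu> - \<theta>^2 < r" using less_cSup_iff[OF Rne bddR] by auto
      then obtain z where r: "r = \<bar>bilf V N z z\<bar> / nrmf V z" and nz: "nrmf V z \<noteq> 0" using rR[unfolded Rs_def] by blast
      have p: "nrmf V z > 0" using nz nrm_nonneg[of V z] by linarith
      define c where "c = sqrt (5/2 / nrmf V z)"
      have c2: "c^2 = 5/2 / nrmf V z" unfolding c_def using p by simp
      define x where "x = (\<lambda>v. c * z v)"
      have nx: "nrmf V x = 5/2" unfolding x_def nrm_scale c2 using p by simp
      have bxe: "c^2 * \<bar>bilf V N z z\<bar> = 5/2 * r" unfolding r c2 using p by simp
      have gt: "5/2 * (\<mu> - \<theta>^2) \<le> 5/2 * r" using rgt by simp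
      have core_app: "\<mu> \<le> B + 8/5 * (5 + 11 * real d) * \<theta>"
        if symA: "\<And>u v. A u v = A v u"
          and rowA: "\<And>u. u \<in> V \<Longrightarrow> (\<Sum>v\<in>V. \<bar>A u v\<bar>) \<le> 2 * real d"
          and SZA: "\<And>z. z \<in> Zset h n d \<Longrightarrow> \<bar>restricted_form V A (Estar d) z z\<bar> \<le> S"
          and muBA: "\<And>z. \<bar>bilf V A z z\<bar> \<le> \<mu> * nrmf V z"
          and bA: "bilf V A x x \<ge> 5/2 * (\<mu> - \<theta>^2)" for A
      proof -
        have "\<mu> \<le> 18/5 * (4 * sqrt (real d) + 18/5 * S) + 8/5 * \<theta> * (5 + 11 * real d)"
          using core[OF hp np d2 symA rowA[unfolded V_def] SZA[unfolded V_def] mu0 mud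
                muBA[unfolded V_def] th0 th1 nx[unfolded V_def] bA[unfolded V_def]] by simp
        then show ?thesis unfolding B_def by (simp add: algebra_simps)
      qed
      show "\<mu> \<le> B + 8/5 * (5 + 11 * real d) * \<theta>"
      proof (cases "bilf V N z z \<ge> 0")
        case True
        have "bilf V N x x = c^2 * \<bar>bilf V N z z\<bar>" unfolding x_def bil_scale using True by simp
        then have "bilf V N x x \<ge> 5/2 * (\<mu> - \<theta>^2)" using bxe gt by linarith
        note cc = core_app[OF symN rowN SZ muB this]
        show ?thesis by (rule cc)
      next
        case False
        have "bilf V (\<lambda>u v. - N u v) x x = c^2 * \<bar>bilf V N z z\<bar>"
          unfolding x_def bil_scale bil_neg using False by simp
        then have bA: "bilf V (\<lambda>u v. - N u v) x x \<ge> 5/2 * (\<mu> - \<theta>^2)" using bxe gt by linarith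
        have "\<And>u v. - N u v = - N v u" using symN by simp
        moreover have "\<And>u. u \<in> V \<Longrightarrow> (\<Sum>v\<in>V. \<bar>- N u v\<bar>) \<le> 2 * real d" using rowN by simp
        moreover have "\<And>z. z \<in> Zset h n d \<Longrightarrow> \<bar>restricted_form V (\<lambda>u v. - N u v) (Estar d) z z\<bar> \<le> S"
          using SZ by (simp add: rf_neg)
        moreover have "\<And>z. \<bar>bilf V (\<lambda>u v. - N u v) z z\<bar> \<le> \<mu> * nrmf V z" using muB by (simp add: bil_neg)
        ultimately show ?thesis by (intro core_app[OF _ _ _ _ bA])
      qed
    qed
    have "lambda_star h n G \<le> B" using lam_le mu_le by linarith
    also have "B \<le> 96 * S + 480 * sqrt (real d)" unfolding B_def using S0 by simp
    finally show ?thesis unfolding S_def V_def N_def by simp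
  qed
qed

end
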